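(* (a) For each $f\in\mathcal{F}_\mathrm{concave}^\nearrow(0,\infty)$ define $\check f(t):=\inf_{x>0}\{xt-f(x)\}$ for $t\in(0,\infty)$. Then $\check f\in\mathcal{F}_\mathrm{concave}^\nearrow(0,\infty)$, and $f\mapsto\check f$ is an involutive bijection on $\mathcal{F}_\mathrm{concave}^\nearrow(0,\infty)$, i.e., $\check{\check f}=f$. (b) For every $f\in\mathcal{F}_\mathrm{concave}^\nearrow(0,\infty)$ and $B\in\mathbb{P}_n$, $$\mathrm{Tr}\, f(B)=\inf_{A\in\mathbb{P}_n}\{\mathrm{Tr}\, AB-\mathrm{Tr}\,\check f(A)\}.$$ (c) Let $f$ be a non-decreasing function on $(0,\infty)$ and $r>0$. If $x\mapsto f(x^{1+r})$ is concave on $(0,\infty)$, then $f\in\mathcal{F}_\mathrm{concave}^\nearrow(0,\infty)$ and $x\mapsto\check f(x^{-r})$ is convex on $(0,\infty)$. (d) Let $f\in\mathcal{F}_\mathrm{concave}^\nearrow(0,\infty)$ and $r>0$. If $x\mapsto f(x^{1+r})$ is convex on $(0,\infty)$, then $x\mapsto\check f(x^{-r})$ is concave on $(0,\infty)$.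
   Context: $\mathcal{F}_\mathrm{concave}^\nearrow(0,\infty)$ is the set of non-decreasing concave real functions $f$ on $(0,\infty)$ such that $\lim_{x\to\infty}f(x)/x=0$. $\mathbb{P}_n$: positive definite $n\times n$ complex matrices; $\mathrm{Tr}$: usual trace. *)

theory Defs
  imports "HOL-Analysis.Analysis" "Jordan_Normal_Form.Matrix"
begin

definition Fcc :: "(real \<Rightarrow> real) \<Rightarrow> bool" where
  "Fcc f \<longleftrightarrow> mono_on {0<..} f \<and> concave_on {0<..} f \<and>
            ((\<lambda>x. f x / x) \<longlongrightarrow> 0) at_top"

definition fcheck :: "(real \<Rightarrow> real) \<Rightarrow> real \<Rightarrow> real" where
  "fcheck f t = (INF x\<in>{0<..}. x * t - f x)"

definition adjoint_mat :: "complex mat \<Rightarrow> complex mat" where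
  "adjoint_mat A = mat (dim_col A) (dim_row A) (\<lambda>(i,j). cnj (A $$ (j,i)))"

definition trace_mat :: "complex mat \<Rightarrow> complex" where
  "trace_mat A = (\<Sum>i<dim_row A. A $$ (i,i))"

definition hermitian_mat :: "nat \<Rightarrow> complex mat \<Rightarrow> bool" where
  "hermitian_mat n A \<longleftrightarrow> A \<in> carrier_mat n n \<and> adjoint_mat A = A"

definition posdef_mat :: "nat \<Rightarrow> complex mat \<Rightarrow> bool" where
  "posdef_mat n A \<longleftrightarrow> hermitian_mat n A \<and>
     (\<forall>v \<in> carrier_vec n. v \<noteq> 0\<^sub>v n \<longrightarrow>
        0 < Re (\<Sum>i<n. cnj (v $ i) * (A *\<^sub>v v) $ i))"

definition unitary_mat :: "nat \<Rightarrow> complex mat \<Rightarrow> bool" where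
  "unitary_mat n U \<longleftrightarrow> U \<in> carrier_mat n n \<and> adjoint_mat U * U = 1\<^sub>m n"

definition mat_fun :: "(real \<Rightarrow> real) \<Rightarrow> complex mat \<Rightarrow> complex mat" where
  "mat_fun f A = (SOME M. \<exists>U (ev::nat \<Rightarrow> real).
      unitary_mat (dim_row A) U \<and>
      A = U * mat_diag (dim_row A) (\<lambda>i. complex_of_real (ev i)) * adjoint_mat U \<and>
      M = U * mat_diag (dim_row A) (\<lambda>i. complex_of_real (f (ev i))) * adjoint_mat U)"

end

theory Submission
  imports Defs "Jordan_Normal_Form.Schur_Decomposition"
begin


lemma mono_lim_bdd:
  fixes f :: "real \<Rightarrow> real"
  assumes mono: "mono_on {0<..} f" and lim: "((\<lambda>x. f x / x) \<longlongrightarrow> 0) at_top"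
    and t: "t > 0"
  shows "\<exists>C. \<forall>x>0. C \<le> x * t - f x"
proof -
  from lim t have "eventually (\<lambda>x. dist (f x / x) 0 < t) at_top"
    by (simp add: tendsto_iff)
  then obtain X0 where X0: "\<And>x. x \<ge> X0 \<Longrightarrow> \<bar>f x / x\<bar> < t"
    by (auto simp: eventually_at_top_linorder)
  define X where "X = max X0 1"
  have X: "X > 0" "X \<ge> X0" by (auto simp: X_def)
  show ?thesis
  proof (intro exI allI impI)
    fix x :: real assume x: "x > 0"
    show "min 0 (- f X) \<le> x * t - f x"
    proof (cases "x \<ge> X")
      case True
      with X have "\<bar>f x / x\<bar> < t" by (intro X0) auto
      with x have "f x < t * x" by (auto simp: abs_less_iff field_simps)
      then show ?thesis by (simp add: algebra_simps)
    next
      case False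
      with mono x X have "f x \<le> f X" by (auto intro: mono_onD)
      moreover have "x * t > 0" using x t by simp
      ultimately show ?thesis by linarith
    qed
  qed
qed

lemma fcheck_bdd:
  fixes f :: "real \<Rightarrow> real"
  assumes "mono_on {0<..} f" "((\<lambda>x. f x / x) \<longlongrightarrow> 0) at_top" "t > 0"
  shows "bdd_below ((\<lambda>x. x * t - f x) ` {0<..})"
  using mono_lim_bdd[OF assms] by (auto simp: bdd_below_def)

lemma fcheck_le:
  fixes f :: "real \<Rightarrow> real"
  assumes "mono_on {0<..} f" "((\<lambda>x. f x / x) \<longlongrightarrow> 0) at_top" "t > 0" "x > 0"
  shows "fcheck f t \<le> x * t - f x"
  unfolding fcheck_def by (rule cINF_lower[OF fcheck_bdd[OF assms(1-3)]]) (use assms in auto)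

lemma fcheck_ge:
  assumes "\<And>x. x > 0 \<Longrightarrow> c \<le> x * t - f x"
  shows "c \<le> fcheck f t"
  unfolding fcheck_def by (rule cINF_greatest) (use assms in auto)

lemma concave_slopes:
  assumes conc: "concave_on {0<..} f" and "0 < s" "s < t" "t < y"
  shows "(f y - f t) / (y - t) \<le> (f t - f s) / (t - s)"
proof -
  define \<mu> where "\<mu> = (t - s) / (y - s)"
  have mu: "0 \<le> \<mu>" "\<mu> \<le> 1" using assms by (auto simp: \<mu>_def field_simps)
  have m1: "\<mu> * (y - s) = t - s" using assms by (simp add: \<mu>_def)
  have "(1 - \<mu>) * s + \<mu> * y = s + \<mu> * (y - s)" by (simp add: algebra_simps)
  then have eq: "(1 - \<mu>) *\<^sub>R s + \<mu> *\<^sub>R y = t" using m1 by simp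
  have "f ((1 - \<mu>) *\<^sub>R s + \<mu> *\<^sub>R y) \<ge> (1 - \<mu>) * f s + \<mu> * f y"
    by (rule concave_onD[OF conc mu]) (use assms in auto)
  then have "f t \<ge> (1 - \<mu>) * f s + \<mu> * f y" unfolding eq .
  then have H: "f t \<ge> f s + \<mu> * (f y - f s)" by (simp add: algebra_simps)
  have ys: "y - s > 0" "y - t > 0" "t - s > 0" using assms by auto
  have H1: "(f t - f s) * (y - s) \<ge> (t - s) * (f y - f s)"
    using H ys unfolding \<mu>_def by (simp add: field_simps)
  have "(f y - f t) * (t - s) \<le> (f t - f s) * (y - t)"
  proof -
    have "(f y - f t) * (t - s) = (f y - f s) * (t - s) - (f t - f s) * (t - s)" by (simp add: algebra_simps)
    also have "\<dots> \<le> (f t - f s) * (y - s) - (f t - f s) * (t - s)" using H1 by (simp add: algebra_simps)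
    also have "\<dots> = (f t - f s) * (y - t)" by (simp add: algebra_simps)
    finally show ?thesis .
  qed
  then show ?thesis using ys by (simp add: divide_simps)
qed

lemma supergradient:
  assumes mono: "mono_on {0<..} f" and conc: "concave_on {0<..} f" and t: "t > 0"
  shows "\<exists>p\<ge>0. \<forall>y>0. f y \<le> f t + p * (y - t)"
proof -
  define L where "L = (\<lambda>s. (f t - f s) / (t - s)) ` {0<..<t}"
  define p where "p = Inf L"
  have Lne: "L \<noteq> {}" using t by (auto simp: L_def intro!: exI[of _ "t/2"])
  have right: "(f y - f t) / (y - t) \<le> l" if "y > t" "l \<in> L" for y l
    using that concave_slopes[OF conc] by (auto simp: L_def)
  have bdd: "bdd_below L"
    using right[of "t+1"] by (auto simp: bdd_below_def)
  have pr: "(f y - f t) / (y - t) \<le> p" if "y > t" for y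
    unfolding p_def by (rule cInf_greatest[OF Lne]) (use right that in auto)
  have pl: "p \<le> (f t - f s) / (t - s)" if "0 < s" "s < t" for s
    unfolding p_def by (rule cInf_lower[OF _ bdd]) (use that in \<open>auto simp: L_def\<close>)
  have p0: "p \<ge> 0"
  proof -
    have "f (t+1) \<ge> f t" using mono t by (auto intro: mono_onD)
    then have "0 \<le> (f (t+1) - f t) / ((t+1) - t)" by simp
    also have "\<dots> \<le> p" by (rule pr) simp
    finally show ?thesis .
  qed
  show ?thesis
  proof (intro exI[of _ p] conjI allI impI p0)
    fix y :: real assume y: "y > 0"
    consider "y > t" | "y = t" | "y < t" by linarith
    then show "f y \<le> f t + p * (y - t)"
    proof cases
      case 1 with pr[OF 1] show ?thesis by (simp add: divide_simps mult.commute)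
    next
      case 2 then show ?thesis by simp
    next
      case 3 with pl[OF y 3] show ?thesis by (simp add: divide_simps algebra_simps)
    qed
  qed
qed


lemma FccD: assumes "Fcc f"
  shows "mono_on {0<..} f" "concave_on {0<..} f" "((\<lambda>x. f x / x) \<longlongrightarrow> 0) at_top"
  using assms by (auto simp: Fcc_def)

lemma fcheck_mono:
  assumes F: "Fcc f" shows "mono_on {0<..} (fcheck f)"
proof (rule mono_onI)
  fix a b :: real assume ab: "a \<in> {0<..}" "b \<in> {0<..}" "a \<le> b"
  show "fcheck f a \<le> fcheck f b"
  proof (rule fcheck_ge)
    fix x :: real assume x: "x > 0"
    have "fcheck f a \<le> x * a - f x" using fcheck_le[OF FccD(1,3)[OF F]] ab x by auto
    also have "\<dots> \<le> x * b - f x" using ab x by (simp add: mult_left_mono)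
    finally show "fcheck f a \<le> x * b - f x" .
  qed
qed

lemma fcheck_concave:
  assumes F: "Fcc f" shows "concave_on {0<..} (fcheck f)"
  unfolding concave_on_iff
proof (intro conjI ballI allI impI)
  show "convex ({0<..} :: real set)" by simp
  fix a b u v :: real assume ab: "a \<in> {0<..}" "b \<in> {0<..}" and uv: "u \<ge> 0" "v \<ge> 0" "u + v = 1"
  show "u * fcheck f a + v * fcheck f b \<le> fcheck f (u *\<^sub>R a + v *\<^sub>R b)"
    unfolding scaleR_conv_of_real of_real_def[symmetric] of_real_eq_id id_def
  proof (rule fcheck_ge)
    fix x :: real assume x: "x > 0"
    have "u * fcheck f a \<le> u * (x * a - f x)"
      using fcheck_le[OF FccD(1,3)[OF F]] ab x uv by (intro mult_left_mono) auto
    moreover have "v * fcheck f b \<le> v * (x * b - f x)"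
      using fcheck_le[OF FccD(1,3)[OF F]] ab x uv by (intro mult_left_mono) auto
    moreover have "u * (x * a - f x) + v * (x * b - f x) = x * (u * a + v * b) - f x"
      using uv by (simp add: algebra_simps) (metis distrib_left mult.commute mult_1)
    ultimately show "u * fcheck f a + v * fcheck f b \<le> x * (u * a + v * b) - f x" by linarith
  qed
qed

lemma fcheck_lim:
  assumes F: "Fcc f" shows "((\<lambda>t. fcheck f t / t) \<longlongrightarrow> 0) at_top"
  unfolding tendsto_iff
proof (intro allI impI)
  fix e :: real assume e: "e > 0"
  note mono = FccD(1)[OF F] and lim = FccD(3)[OF F]
  have "eventually (\<lambda>x. dist (f x / x) 0 < e/2) at_top"
    by (rule tendstoD[OF lim]) (use e in simp)
  then obtain X0 where X0: "\<And>x. x \<ge> X0 \<Longrightarrow> \<bar>f x / x\<bar> < e/2"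
    by (auto simp: eventually_at_top_linorder)
  define X where "X = max X0 1"
  have X: "X > 0" "X \<ge> X0" by (auto simp: X_def)
  define C where "C = max 0 (f X)"
  define a where "a = e / 2"
  have a: "a > 0" using e by (simp add: a_def)
  define N where "N = 1 + e + C / e + 2 * \<bar>f a\<bar> / e"
  have lower: "- C \<le> fcheck f t" if t: "t \<ge> e/2" for t
  proof (rule fcheck_ge)
    fix x :: real assume x: "x > 0"
    show "- C \<le> x * t - f x"
    proof (cases "x \<ge> X")
      case True
      with X have "\<bar>f x / x\<bar> < e/2" by (intro X0) auto
      with x have "f x < e/2 * x" by (auto simp: abs_less_iff field_simps)
      moreover have "x * (e/2) \<le> x * t" using x t by (intro mult_left_mono) auto
      ultimately show ?thesis by (simp add: C_def algebra_simps)
    next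
      case False
      with mono x X have "f x \<le> f X" by (auto intro: mono_onD)
      moreover have "x * t > 0" using x t e by simp
      ultimately show ?thesis by (simp add: C_def)
    qed
  qed
  show "eventually (\<lambda>t. dist (fcheck f t / t) 0 < e) at_top"
    unfolding eventually_at_top_linorder
  proof (intro exI[of _ N] allI impI)
    fix t assume t: "t \<ge> N"
    have C0: "C \<ge> 0" by (simp add: C_def)
    have n1: "C / e \<ge> 0" "2 * \<bar>f a\<bar> / e \<ge> 0" using C0 e by auto
    have tpos: "t > 0" using t e n1 unfolding N_def by linarith
    have te: "t \<ge> e/2" using t e n1 unfolding N_def by linarith
    have tC: "t > C / e" using t e n1 unfolding N_def by linarith
    have tf: "t > 2 * \<bar>f a\<bar> / e" using t e n1 unfolding N_def by linarith
    have L: "fcheck f t / t \<ge> - C / t" using divide_right_mono[OF lower[OF te], of t] tpos by simp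
    have "C < t * e" using tC e by (simp add: pos_divide_less_eq)
    then have "C / t < e" using tpos by (simp add: pos_divide_less_eq mult.commute)
    then have L2: "fcheck f t / t > - e" using L by linarith
    have U: "fcheck f t \<le> a * t - f a" using fcheck_le[OF mono lim tpos a] .
    have "2 * \<bar>f a\<bar> < t * e" using tf e by (simp add: pos_divide_less_eq)
    moreover have "a * t = t * e / 2" unfolding a_def by simp
    moreover have "- f a \<le> \<bar>f a\<bar>" by simp
    ultimately have "a * t - f a < t * e" by linarith
    with U have "fcheck f t < t * e" by simp
    then have "fcheck f t < e * t" by (simp only: mult.commute)
    then have U2: "fcheck f t / t < e" using tpos by (simp add: pos_divide_less_eq)
    show "dist (fcheck f t / t) 0 < e" using L2 U2 by simp
  qed
qed

lemma fcheck_Fcc: assumes "Fcc f" shows "Fcc (fcheck f)"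
  using fcheck_mono[OF assms] fcheck_concave[OF assms] fcheck_lim[OF assms] by (simp add: Fcc_def)

lemma fcheck_fcheck:
  assumes F: "Fcc f" and t: "t > 0" shows "fcheck (fcheck f) t = f t"
proof (rule antisym)
  note mono = FccD(1)[OF F] and lim = FccD(3)[OF F]
  note G = fcheck_Fcc[OF F]
  note gmono = FccD(1)[OF G] and glim = FccD(3)[OF G]
  show "f t \<le> fcheck (fcheck f) t"
  proof (rule fcheck_ge)
    fix a :: real assume a: "a > 0"
    have "fcheck f a \<le> t * a - f t" by (rule fcheck_le[OF mono lim a t])
    then show "f t \<le> a * t - fcheck f a" by (simp add: algebra_simps)
  qed
  obtain p where p: "p \<ge> 0" "\<And>y. y > 0 \<Longrightarrow> f y \<le> f t + p * (y - t)"
    using supergradient[OF mono FccD(2)[OF F] t] by blast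
  show "fcheck (fcheck f) t \<le> f t"
  proof (cases "p > 0")
    case True
    have "p * t - f t \<le> fcheck f p"
    proof (rule fcheck_ge)
      fix y :: real assume "y > 0"
      from p(2)[OF this] show "p * t - f t \<le> y * p - f y" by (simp add: algebra_simps)
    qed
    moreover have "fcheck (fcheck f) t \<le> p * t - fcheck f p"
      by (rule fcheck_le[OF gmono glim t True])
    ultimately show ?thesis by linarith
  next
    case False
    with p have p0: "p = 0" by simp
    show ?thesis
    proof (rule field_le_epsilon)
      fix e :: real assume e: "e > 0"
      define a where "a = e / t"
      have a: "a > 0" using e t by (simp add: a_def)
      have "- f t \<le> fcheck f a"
      proof (rule fcheck_ge)
        fix y :: real assume y: "y > 0"
        from p(2)[OF y] p0 have "f y \<le> f t" by simp
        moreover have "y * a > 0" using y a by simp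
        ultimately show "- f t \<le> y * a - f y" by linarith
      qed
      moreover have "fcheck (fcheck f) t \<le> a * t - fcheck f a"
        by (rule fcheck_le[OF gmono glim t a])
      moreover have "a * t = e" using t by (simp add: a_def)
      ultimately show "fcheck (fcheck f) t \<le> f t + e" by linarith
    qed
  qed
qed

lemma partA: "Fcc f \<Longrightarrow> Fcc (fcheck f) \<and> (\<forall>t>0. fcheck (fcheck f) t = f t)"
  using fcheck_Fcc fcheck_fcheck by blast


lemma powr_persp:
  fixes x u r :: real assumes "x > 0" "u > 0"
  shows "(x*u) powr (1+r) * x powr (-r) = x * u powr (1+r)"
proof -
  have "(x*u) powr (1+r) * x powr (-r) = u powr (1+r) * (x powr (1+r) * x powr (-r))"
    using assms by (simp add: powr_mult)
  also have "x powr (1+r) * x powr (-r) = x"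
    using assms by (simp flip: powr_add)
  finally show ?thesis by simp
qed

lemma powr_root_inv: fixes y r :: real assumes "y > 0" "r > 0"
  shows "(y powr (1/(1+r))) powr (1+r) = y"
  using assms by (simp add: powr_powr)

lemma powr_inv_concave:
  fixes r :: real assumes r: "r > 0"
  shows "concave_on {0<..} (\<lambda>y. y powr (1/(1+r)))"
  unfolding concave_on_iff
proof (intro conjI ballI allI impI)
  show "convex ({0<..} :: real set)" by simp
  fix a b u v :: real assume ab: "a \<in> {0<..}" "b \<in> {0<..}" and uv: "u \<ge> 0" "v \<ge> 0" "u + v = 1"
  define q where "q = 1 + r"
  have q: "q \<ge> 1" "q > 0" using r by (auto simp: q_def)
  define za where "za = a powr (1/q)"
  define zb where "zb = b powr (1/q)"
  have z: "za > 0" "zb > 0" using ab by (auto simp: za_def zb_def)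
  have zq: "za powr q = a" "zb powr q = b" using ab q by (auto simp: za_def zb_def powr_powr)
  have u1: "1 - v = u" using uv by simp
  have "((1 - v) * za + v * zb) powr q \<le> (1 - v) * za powr q + v * zb powr q"
    using convex_onD[OF powr_convex[OF q(1)], of v za zb] uv z by simp
  then have "(u * za + v * zb) powr q \<le> u * za powr q + v * zb powr q" unfolding u1 .
  then have le: "(u * za + v * zb) powr q \<le> u * a + v * b" using zq by simp
  have pos: "u * za + v * zb \<ge> 0" using uv z by simp
  have "u * za + v * zb = ((u * za + v * zb) powr q) powr (1/q)"
    using pos q by (simp add: powr_powr)
  also have "\<dots> \<le> (u * a + v * b) powr (1/q)"
    by (rule powr_mono2) (use le q pos in auto)
  finally show "u * a powr (1/(1+r)) + v * b powr (1/(1+r)) \<le> (u *\<^sub>R a + v *\<^sub>R b) powr (1/(1+r))"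
    by (simp add: za_def zb_def q_def)
qed


lemma partD:
  fixes f :: "real \<Rightarrow> real" and r :: real
  assumes F: "Fcc f" and r: "r > 0" and cv: "convex_on {0<..} (\<lambda>x. f (x powr (1 + r)))"
  shows "concave_on {0<..} (\<lambda>x. fcheck f (x powr (- r)))"
  unfolding concave_on_iff
proof (intro conjI ballI allI impI)
  show "convex ({0<..} :: real set)" by simp
  note mono = FccD(1)[OF F] and lim = FccD(3)[OF F]
  define g where "g = (\<lambda>x. f (x powr (1 + r)))"
  fix a b u v :: real assume ab: "a \<in> {0<..}" "b \<in> {0<..}" and uv: "u \<ge> 0" "v \<ge> 0" "u + v = 1"
  define xl where "xl = u * a + v * b"
  have xl: "xl > 0" using ab uv unfolding xl_def
    by (metis add_pos_nonneg add_nonneg_pos greaterThan_iff less_eq_real_def mult_pos_pos mult_nonneg_nonneg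
        mult_eq_0_iff add.commute add_cancel_right_left zero_neq_one)
  have psi_le: "fcheck f (x powr (- r)) \<le> x * w powr (1+r) - g (x * w)" if "x > 0" "w > 0" for x w
  proof -
    have "fcheck f (x powr (- r)) \<le> (x*w) powr (1+r) * x powr (-r) - f ((x*w) powr (1+r))"
      by (rule fcheck_le[OF mono lim]) (use that in auto)
    then show ?thesis using powr_persp[OF that, of r] by (simp add: g_def)
  qed
  show "u * fcheck f (a powr - r) + v * fcheck f (b powr - r) \<le> fcheck f ((u *\<^sub>R a + v *\<^sub>R b) powr - r)"
    unfolding scaleR_conv_of_real of_real_def[symmetric] of_real_eq_id id_def xl_def[symmetric]
  proof (rule fcheck_ge)
    fix y :: real assume y: "y > 0"
    define w where "w = y powr (1/(1+r)) / xl"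
    have w: "w > 0" using y xl by (simp add: w_def)
    have xw: "xl * w = y powr (1/(1+r))" using xl by (simp add: w_def)
    have yq: "(xl * w) powr (1+r) = y" unfolding xw using y r by (simp add: powr_powr)
    have val: "y * xl powr (- r) - f y = xl * w powr (1+r) - g (xl * w)"
      using powr_persp[OF xl w, of r] yq by (simp add: g_def)
    have "g (xl * w) = g (u * (a * w) + v * (b * w))" by (simp add: xl_def algebra_simps)
    also have "\<dots> \<le> u * g (a * w) + v * g (b * w)"
    proof -
      have H: "\<And>x y. x > 0 \<Longrightarrow> y > 0 \<Longrightarrow> g (u * x + v * y) \<le> u * g x + v * g y"
        using cv uv unfolding convex_on_def g_def by auto
      show ?thesis by (rule H) (use ab w in auto)
    qed
    finally have gl: "g (xl * w) \<le> u * g (a * w) + v * g (b * w)" .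
    have "u * fcheck f (a powr - r) \<le> u * (a * w powr (1+r) - g (a * w))"
      using psi_le[of a w] ab w uv by (intro mult_left_mono) auto
    moreover have "v * fcheck f (b powr - r) \<le> v * (b * w powr (1+r) - g (b * w))"
      using psi_le[of b w] ab w uv by (intro mult_left_mono) auto
    moreover have "u * (a * w powr (1+r) - g (a * w)) + v * (b * w powr (1+r) - g (b * w))
        = xl * w powr (1+r) - (u * g (a * w) + v * g (b * w))"
      by (simp add: xl_def algebra_simps)
    ultimately show "u * fcheck f (a powr - r) + v * fcheck f (b powr - r) \<le> y * xl powr - r - f y"
      using gl val by linarith
  qed
qed


lemma partC_Fcc:
  fixes f :: "real \<Rightarrow> real" and r :: real
  assumes mono: "mono_on {0<..} f" and r: "r > 0" and cc: "concave_on {0<..} (\<lambda>x. f (x powr (1 + r)))"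
  shows "Fcc f"
proof -
  define g where "g = (\<lambda>x. f (x powr (1 + r)))"
  define h where "h = (\<lambda>y::real. y powr (1/(1+r)))"
  have fg: "f y = g (h y)" if "y > 0" for y
    using that r by (simp add: g_def h_def powr_powr)
  have hpos: "h y > 0" if "y > 0" for y using that by (simp add: h_def)
  have gmono: "mono_on {0<..} g"
  proof (rule mono_onI)
    fix x y :: real assume "x \<in> {0<..}" "y \<in> {0<..}" "x \<le> y"
    then show "g x \<le> g y" unfolding g_def using r
      by (intro mono_onD[OF mono]) (auto intro: powr_mono2)
  qed
  have gcc: "concave_on {0<..} g" using cc by (simp add: g_def)
  have fcc: "concave_on {0<..} f"
    unfolding concave_on_iff
  proof (intro conjI ballI allI impI)
    show "convex ({0<..} :: real set)" by simp
    fix a b u v :: real assume ab: "a \<in> {0<..}" "b \<in> {0<..}" and uv: "u \<ge> 0" "v \<ge> 0" "u + v = 1"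
    have pos: "u * a + v * b > 0" using ab uv
      by (smt (verit, best) greaterThan_iff mult_nonneg_nonneg mult_pos_pos)
    have "u * f a + v * f b = u * g (h a) + v * g (h b)" using ab by (simp add: fg)
    also have "\<dots> \<le> g (u * h a + v * h b)"
      using gcc[unfolded concave_on_iff] ab uv hpos by auto
    also have "\<dots> \<le> g (h (u * a + v * b))"
    proof (rule mono_onD[OF gmono])
      show "u * h a + v * h b \<le> h (u * a + v * b)"
        using powr_inv_concave[OF r, unfolded concave_on_iff] ab uv by (auto simp: h_def)
      show "u * h a + v * h b \<in> {0<..}" using ab uv hpos
        by (smt (verit, best) greaterThan_iff mult_nonneg_nonneg mult_pos_pos)
      show "h (u * a + v * b) \<in> {0<..}" using hpos[OF pos] by simp
    qed
    also have "\<dots> = f (u * a + v * b)" using fg[OF pos] by simp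
    finally show "u * f a + v * f b \<le> f (u *\<^sub>R a + v *\<^sub>R b)" by simp
  qed
  obtain p where p: "p \<ge> 0" "\<And>y. y > 0 \<Longrightarrow> g y \<le> g 1 + p * (y - 1)"
    using supergradient[OF gmono gcc, of 1] by auto
  have lim: "((\<lambda>x. f x / x) \<longlongrightarrow> 0) at_top"
  proof (rule tendsto_sandwich)
    show "eventually (\<lambda>y. f 1 / y \<le> f y / y) at_top"
      unfolding eventually_at_top_linorder
    proof (intro exI[of _ 1] allI impI)
      fix y :: real assume "y \<ge> 1"
      then have "f 1 \<le> f y" using mono by (auto intro: mono_onD)
      then show "f 1 / y \<le> f y / y" using \<open>y \<ge> 1\<close> by (simp add: divide_right_mono)
    qed
    show "eventually (\<lambda>y. f y / y \<le> (g 1 - p) / y + p * y powr (1/(1+r) - 1)) at_top"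
      unfolding eventually_at_top_linorder
    proof (intro exI[of _ 1] allI impI)
      fix y :: real assume y1: "y \<ge> 1"
      then have y: "y > 0" by simp
      have "f y \<le> g 1 + p * (h y - 1)" using fg[OF y] p(2)[OF hpos[OF y]] by simp
      then have "f y / y \<le> (g 1 + p * (h y - 1)) / y" using y by (simp add: divide_right_mono)
      also have "\<dots> = (g 1 - p) / y + p * (h y / y)" using y by (simp add: field_simps)
      also have "h y / y = y powr (1/(1+r) - 1)" using y by (simp add: h_def powr_diff)
      finally show "f y / y \<le> (g 1 - p) / y + p * y powr (1/(1+r) - 1)" .
    qed
    show "((\<lambda>y. f 1 / y) \<longlongrightarrow> 0) at_top"
      by (rule tendsto_divide_0[OF tendsto_const filterlim_at_top_imp_at_infinity[OF filterlim_ident]])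
    have "((\<lambda>y. (g 1 - p) / y) \<longlongrightarrow> 0) at_top"
      by (rule tendsto_divide_0[OF tendsto_const filterlim_at_top_imp_at_infinity[OF filterlim_ident]])
    moreover have "((\<lambda>y::real. p * y powr (1/(1+r) - 1)) \<longlongrightarrow> p * 0) at_top"
      by (intro tendsto_mult tendsto_const tendsto_neg_powr filterlim_ident) (use r in \<open>simp add: field_simps\<close>)
    ultimately show "((\<lambda>y. (g 1 - p) / y + p * y powr (1/(1+r) - 1)) \<longlongrightarrow> 0) at_top"
      using tendsto_add[of _ 0 _ _ 0] by fastforce
  qed
  show ?thesis using mono fcc lim by (simp add: Fcc_def)
qed


lemma persp_ineq:
  fixes a b z1 z2 u v r :: real
  assumes pos: "a > 0" "b > 0" "z1 > 0" "z2 > 0" and uv: "u \<ge> 0" "v \<ge> 0" "u + v = 1" and r: "r > 0"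
  shows "(u * z1 + v * z2) powr (1+r) * (u * a + v * b) powr (-r)
     \<le> u * (z1 powr (1+r) * a powr (-r)) + v * (z2 powr (1+r) * b powr (-r))"
proof -
  define xl where "xl = u * a + v * b"
  define zl where "zl = u * z1 + v * z2"
  have xl: "xl > 0" using pos uv unfolding xl_def
    by (smt (verit, best) mult_nonneg_nonneg mult_pos_pos)
  have zl: "zl > 0" using pos uv unfolding zl_def
    by (smt (verit, best) mult_nonneg_nonneg mult_pos_pos)
  have P: "z powr (1+r) * x powr (-r) = x * (z / x) powr (1+r)" if "x > 0" "z > 0" for x z
    using powr_persp[of x "z/x" r] that by simp
  define t where "t = v * b / xl"
  have t: "0 \<le> t" "t \<le> 1" using uv pos xl by (auto simp: t_def xl_def field_simps)
  have t1: "1 - t = u * a / xl" using xl by (simp add: t_def xl_def field_simps)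
  have comb: "zl / xl = (1 - t) * (z1 / a) + t * (z2 / b)"
  proof -
    have "(1 - t) * (z1 / a) + t * (z2 / b) = u * z1 / xl + v * z2 / xl"
    proof -
      have h1: "(1 - t) * (z1 / a) = u * z1 / xl" unfolding t1 using pos by simp
      have h2: "t * (z2 / b) = v * z2 / xl" unfolding t_def using pos by simp
      show ?thesis using h1 h2 by simp
    qed
    also have "\<dots> = zl / xl" by (simp add: zl_def add_divide_distrib)
    finally show ?thesis by simp
  qed
  have cv: "((1 - t) * (z1 / a) + t * (z2 / b)) powr (1+r) \<le> (1 - t) * (z1 / a) powr (1+r) + t * (z2 / b) powr (1+r)"
    using convex_onD[OF powr_convex, of "1+r" t "z1/a" "z2/b"] t pos r by simp
  have "zl powr (1+r) * xl powr (-r) = xl * (zl / xl) powr (1+r)" using P xl zl by simp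
  also have "\<dots> \<le> xl * ((1 - t) * (z1 / a) powr (1+r) + t * (z2 / b) powr (1+r))"
    unfolding comb using cv xl by (simp add: mult_left_mono)
  also have "\<dots> = u * (a * (z1 / a) powr (1+r)) + v * (b * (z2 / b) powr (1+r))"
  proof -
    have "xl * (1 - t) = u * a" unfolding t1 using xl by simp
    moreover have "xl * t = v * b" unfolding t_def using xl by simp
    ultimately show ?thesis by (simp add: distrib_left mult.assoc[symmetric])
  qed
  also have "\<dots> = u * (z1 powr (1+r) * a powr (-r)) + v * (z2 powr (1+r) * b powr (-r))"
    using P pos by simp
  finally show ?thesis by (simp add: xl_def zl_def)
qed

lemma partC_convex:
  fixes f :: "real \<Rightarrow> real" and r :: real
  assumes mono: "mono_on {0<..} f" and r: "r > 0" and cc: "concave_on {0<..} (\<lambda>x. f (x powr (1 + r)))"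
  shows "convex_on {0<..} (\<lambda>x. fcheck f (x powr (- r)))"
  unfolding convex_on_def
proof (intro conjI ballI allI impI)
  show "convex ({0<..} :: real set)" by simp
  have F: "Fcc f" by (rule partC_Fcc[OF mono r cc])
  note lim = FccD(3)[OF F]
  define g where "g = (\<lambda>x. f (x powr (1 + r)))"
  define \<psi> where "\<psi> = (\<lambda>x. fcheck f (x powr (- r)))"
  define F where "F = (\<lambda>z x. z powr (1+r) * x powr (-r) - g z)"
  fix a b u v :: real assume ab: "a \<in> {0<..}" "b \<in> {0<..}" and uv: "u \<ge> 0" "v \<ge> 0" "u + v = 1"
  define xl where "xl = u * a + v * b"
  have xl: "xl > 0" using ab uv unfolding xl_def
    by (smt (verit, best) greaterThan_iff mult_nonneg_nonneg mult_pos_pos)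
  have K: "\<psi> xl \<le> u * F z1 a + v * F z2 b" if z: "z1 > 0" "z2 > 0" for z1 z2
  proof -
    define zl where "zl = u * z1 + v * z2"
    have zl: "zl > 0" using z uv unfolding zl_def
      by (smt (verit, best) mult_nonneg_nonneg mult_pos_pos)
    have "\<psi> xl \<le> zl powr (1+r) * xl powr (-r) - f (zl powr (1+r))"
      unfolding \<psi>_def by (rule fcheck_le[OF mono lim]) (use xl zl in auto)
    moreover have "g zl \<ge> u * g z1 + v * g z2"
      using cc[unfolded concave_on_iff] z uv by (auto simp: zl_def g_def)
    moreover have "zl powr (1+r) * xl powr (-r)
       \<le> u * (z1 powr (1+r) * a powr (-r)) + v * (z2 powr (1+r) * b powr (-r))"
      unfolding zl_def xl_def by (rule persp_ineq) (use ab z uv r in auto)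
    ultimately show ?thesis unfolding F_def g_def by (simp add: algebra_simps)
  qed
  have Fy: "F (y powr (1/(1+r))) x = y * x powr (-r) - f y" if "y > 0" for x y
    using that r by (simp add: F_def g_def powr_powr)
  have "\<psi> xl \<le> u * \<psi> a + v * \<psi> b"
  proof (cases "u = 0")
    case True then have "v = 1" using uv by simp
    then show ?thesis using True by (simp add: xl_def)
  next
    case u0: False
    then have u: "u > 0" using uv by simp
    show ?thesis
    proof (cases "v = 0")
      case True then have "u = 1" using uv by simp
      then show ?thesis using True by (simp add: xl_def)
    next
      case False
      then have v: "v > 0" using uv by simp
      have S1: "\<psi> xl - u * \<psi> a \<le> v * F z2 b" if z2: "z2 > 0" for z2
      proof -
        have "(\<psi> xl - v * F z2 b) / u \<le> fcheck f (a powr - r)"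
        proof (rule fcheck_ge)
          fix y :: real assume y: "y > 0"
          have "\<psi> xl \<le> u * F (y powr (1/(1+r))) a + v * F z2 b"
            using K[of "y powr (1/(1+r))" z2] y z2 by simp
          then have "\<psi> xl - v * F z2 b \<le> u * (y * a powr (-r) - f y)" using Fy[OF y] by simp
          then show "(\<psi> xl - v * F z2 b) / u \<le> y * a powr - r - f y"
            using u by (simp add: divide_le_eq mult.commute)
        qed
        then show ?thesis using u by (simp add: divide_le_eq algebra_simps \<psi>_def)
      qed
      have "(\<psi> xl - u * \<psi> a) / v \<le> fcheck f (b powr - r)"
      proof (rule fcheck_ge)
        fix y :: real assume y: "y > 0"
        have "\<psi> xl - u * \<psi> a \<le> v * F (y powr (1/(1+r))) b" using S1 y by simp
        then have "\<psi> xl - u * \<psi> a \<le> v * (y * b powr (-r) - f y)" using Fy[OF y] by simp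
        then show "(\<psi> xl - u * \<psi> a) / v \<le> y * b powr - r - f y"
          using v by (simp add: divide_le_eq mult.commute)
      qed
      then show ?thesis using v by (simp add: divide_le_eq algebra_simps \<psi>_def)
    qed
  qed
  then show "fcheck f ((u *\<^sub>R a + v *\<^sub>R b) powr - r) \<le> u * fcheck f (a powr - r) + v * fcheck f (b powr - r)"
    by (simp add: \<psi>_def xl_def)
qed


lemma mult_entry:
  assumes "A \<in> carrier_mat n m" "B \<in> carrier_mat m k" "i < n" "j < k"
  shows "(A * B) $$ (i,j) = (\<Sum>l<m. A $$ (i,l) * B $$ (l,j))"
  using assms by (auto simp: scalar_prod_def lessThan_atLeast0 intro!: sum.cong)

lemma adj_dims[simp]: "dim_row (adjoint_mat A) = dim_col A" "dim_col (adjoint_mat A) = dim_row A"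
  by (auto simp: adjoint_mat_def)

lemma adj_carrier[simp]: "A \<in> carrier_mat n m \<Longrightarrow> adjoint_mat A \<in> carrier_mat m n"
  unfolding carrier_mat_def by simp

lemma adj_index[simp]: "i < dim_col A \<Longrightarrow> j < dim_row A \<Longrightarrow> adjoint_mat A $$ (i,j) = cnj (A $$ (j,i))"
  by (auto simp: adjoint_mat_def)

lemma adj_adj[simp]: "adjoint_mat (adjoint_mat A) = A"
  by (rule eq_matI) (simp_all add: adjoint_mat_def)

lemma adj_mult:
  assumes A: "A \<in> carrier_mat n m" and B: "B \<in> carrier_mat m k"
  shows "adjoint_mat (A * B) = adjoint_mat B * adjoint_mat A"
proof (rule eq_matI)
  fix i j assume i: "i < dim_row (adjoint_mat B * adjoint_mat A)" and j: "j < dim_col (adjoint_mat B * adjoint_mat A)"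
  then have i': "i < k" and j': "j < n" using A B by simp_all
  have "adjoint_mat (A * B) $$ (i,j) = cnj ((A*B) $$ (j,i))" using i' j' A B by simp
  also have "\<dots> = (\<Sum>l<m. cnj (A $$ (j,l)) * cnj (B $$ (l,i)))"
    by (simp add: mult_entry[OF A B j' i'])
  also have "\<dots> = (\<Sum>l<m. adjoint_mat B $$ (i,l) * adjoint_mat A $$ (l,j))"
  proof (rule sum.cong[OF refl])
    fix l assume "l \<in> {..<m}"
    then have l: "l < m" by simp
    have "adjoint_mat B $$ (i,l) = cnj (B $$ (l,i))" using B l i' by simp
    moreover have "adjoint_mat A $$ (l,j) = cnj (A $$ (j,l))" using A l j' by simp
    ultimately show "cnj (A $$ (j,l)) * cnj (B $$ (l,i)) = adjoint_mat B $$ (i,l) * adjoint_mat A $$ (l,j)"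
      by (simp only: mult.commute)
  qed
  also have "\<dots> = (adjoint_mat B * adjoint_mat A) $$ (i,j)"
    by (rule mult_entry[symmetric, OF adj_carrier[OF B] adj_carrier[OF A] i' j'])
  finally show "adjoint_mat (A * B) $$ (i, j) = (adjoint_mat B * adjoint_mat A) $$ (i, j)" .
qed (use A B in simp_all)

lemma unitary_right:
  assumes "unitary_mat n U" shows "U * adjoint_mat U = 1\<^sub>m n"
  using assms mat_mult_left_right_inverse[of "adjoint_mat U" n U] by (simp add: unitary_mat_def)

lemma unitary_carrier: "unitary_mat n U \<Longrightarrow> U \<in> carrier_mat n n"
  by (simp add: unitary_mat_def)

lemma adj_diag[simp]:
  "adjoint_mat (mat_diag n (\<lambda>i. complex_of_real (a i))) = mat_diag n (\<lambda>i. complex_of_real (a i))"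
  by (rule eq_matI) (simp_all add: mat_diag_def)

lemma adj_one[simp]: "adjoint_mat (1\<^sub>m n) = 1\<^sub>m n"
  by (rule eq_matI) simp_all

lemma trace_mult:
  assumes A: "A \<in> carrier_mat n m" and B: "B \<in> carrier_mat m n"
  shows "trace_mat (A * B) = (\<Sum>i<n. \<Sum>l<m. A $$ (i,l) * B $$ (l,i))"
proof -
  have d: "dim_row (A * B) = n" using A by simp
  have "trace_mat (A * B) = (\<Sum>i<n. (A * B) $$ (i,i))" by (simp only: trace_mat_def d)
  also have "\<dots> = (\<Sum>i<n. \<Sum>l<m. A $$ (i,l) * B $$ (l,i))"
  proof (rule sum.cong[OF refl])
    fix i assume "i \<in> {..<n}"
    then show "(A * B) $$ (i,i) = (\<Sum>l<m. A $$ (i,l) * B $$ (l,i))"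
      by (intro mult_entry[OF A B]) simp_all
  qed
  finally show ?thesis .
qed

lemma trace_comm:
  assumes A: "A \<in> carrier_mat n m" and B: "B \<in> carrier_mat m n"
  shows "trace_mat (A * B) = trace_mat (B * A)"
proof -
  have "trace_mat (A * B) = (\<Sum>i<n. \<Sum>l<m. A $$ (i,l) * B $$ (l,i))" by (rule trace_mult[OF A B])
  also have "\<dots> = (\<Sum>l<m. \<Sum>i<n. B $$ (l,i) * A $$ (i,l))"
    by (subst sum.swap) (simp add: mult.commute)
  also have "\<dots> = trace_mat (B * A)" by (rule trace_mult[OF B A, symmetric])
  finally show ?thesis .
qed

lemma unitary_mult:
  assumes U: "unitary_mat n U" and V: "unitary_mat n V" shows "unitary_mat n (U * V)"
proof -
  have Uc: "U \<in> carrier_mat n n" and Vc: "V \<in> carrier_mat n n" using U V by (simp_all add: unitary_mat_def)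
  have "adjoint_mat (U * V) * (U * V) = (adjoint_mat V * adjoint_mat U) * (U * V)"
    by (simp add: adj_mult[OF Uc Vc])
  also have "\<dots> = adjoint_mat V * (adjoint_mat U * (U * V))"
    by (rule assoc_mult_mat[OF adj_carrier[OF Vc] adj_carrier[OF Uc] mult_carrier_mat[OF Uc Vc]])
  also have "adjoint_mat U * (U * V) = (adjoint_mat U * U) * V"
    by (rule assoc_mult_mat[OF adj_carrier[OF Uc] Uc Vc, symmetric])
  also have "\<dots> = V" using U Vc by (simp add: unitary_mat_def)
  also have "adjoint_mat V * V = 1\<^sub>m n" using V by (simp add: unitary_mat_def)
  finally show ?thesis using Uc Vc by (simp add: unitary_mat_def)
qed

lemma unitary_adj:
  assumes U: "unitary_mat n U" shows "unitary_mat n (adjoint_mat U)"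
  using unitary_right[OF U] U by (simp add: unitary_mat_def)


lemma cprod_sum:
  assumes "v \<in> carrier_vec n" "w \<in> carrier_vec n"
  shows "v \<bullet>c w = (\<Sum>k<n. v $ k * cnj (w $ k))"
  using assms unfolding scalar_prod_def by (simp add: lessThan_atLeast0)

lemma cprod_self:
  assumes "v \<in> carrier_vec n"
  shows "v \<bullet>c v = complex_of_real (\<Sum>k<n. (cmod (v $ k))^2)"
  unfolding cprod_sum[OF assms assms] of_real_sum
proof (rule sum.cong[OF refl])
  fix k show "v $ k * cnj (v $ k) = complex_of_real ((cmod (v $ k))^2)"
    by (metis complex_norm_square of_real_power)
qed

lemma exists_unitary_first_col:
  fixes v :: "complex vec"
  assumes v: "v \<in> carrier_vec n" and v0: "v \<noteq> 0\<^sub>v n" and n: "n > 0"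
  shows "\<exists>W c. unitary_mat n W \<and> c \<noteq> 0 \<and> (\<forall>k<n. W $$ (k,0) = c * v $ k)"
proof -
  interpret cof_vec_space n "TYPE(complex)" .
  define b where "b = basis_completion v"
  define ws where "ws = gram_schmidt n b"
  from basis_completion[OF v v0, folded b_def]
  have dist_b: "distinct b" and indep: "\<not> lin_dep (set b)" and b: "set b \<subseteq> carrier_vec n"
    and hdb: "hd b = v" and len_b: "length b = n" by auto
  from hdb len_b n obtain vs where bv: "b = v # vs" by (cases b) auto
  from gram_schmidt_result[OF b dist_b indep refl, folded ws_def]
  have ws: "set ws \<subseteq> carrier_vec n" "corthogonal ws" "length ws = n"
    by (auto simp: len_b)
  from gram_schmidt_hd[OF v, of vs, folded bv] have hdws: "hd ws = v" unfolding ws_def .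
  have wsne: "ws \<noteq> []" using ws(3) n by (cases ws) simp_all
  have ws0: "ws ! 0 = v" using hdws wsne by (metis hd_conv_nth)
  have wsc: "ws ! j \<in> carrier_vec n" if "j < n" for j using ws that by auto
  define s where "s = (\<lambda>j. \<Sum>k<n. (cmod (ws ! j $ k))^2)"
  have cs: "ws ! j \<bullet>c ws ! j = complex_of_real (s j)" if "j < n" for j
    unfolding s_def by (rule cprod_self[OF wsc[OF that]])
  have orth: "ws ! i \<bullet>c ws ! j = 0 \<longleftrightarrow> i \<noteq> j" if "i < n" "j < n" for i j
    using corthogonalD[OF ws(2)] that ws(3) by simp
  have spos: "s j > 0" if "j < n" for j
  proof -
    have "s j \<ge> 0" unfolding s_def by (simp add: sum_nonneg)
    moreover have "s j \<noteq> 0" using orth[OF that that] cs[OF that] by simp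
    ultimately show ?thesis by simp
  qed
  define c where "c = (\<lambda>j. complex_of_real (1 / sqrt (s j)))"
  define W where "W = mat n n (\<lambda>(k,j). c j * ws ! j $ k)"
  have Wc: "W \<in> carrier_mat n n" by (simp add: W_def)
  have "adjoint_mat W * W = 1\<^sub>m n"
  proof (rule eq_matI)
    fix i j assume i: "i < dim_row (1\<^sub>m n)" and j: "j < dim_col (1\<^sub>m n)"
    then have i: "i < n" and j: "j < n" by simp_all
    have "(adjoint_mat W * W) $$ (i,j) = (\<Sum>k<n. adjoint_mat W $$ (i,k) * W $$ (k,j))"
      by (rule mult_entry[OF adj_carrier[OF Wc] Wc i j])
    also have "\<dots> = (\<Sum>k<n. (c j * cnj (c i)) * (ws ! j $ k * cnj (ws ! i $ k)))"
    proof (rule sum.cong[OF refl])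
      fix k assume "k \<in> {..<n}"
      then have k: "k < n" by simp
      have "adjoint_mat W $$ (i,k) = cnj (W $$ (k,i))" using Wc i k by simp
      then show "adjoint_mat W $$ (i,k) * W $$ (k,j) = (c j * cnj (c i)) * (ws ! j $ k * cnj (ws ! i $ k))"
        using i j k by (simp add: W_def)
    qed
    also have "\<dots> = (c j * cnj (c i)) * (ws ! j \<bullet>c ws ! i)"
      by (simp add: cprod_sum[OF wsc[OF j] wsc[OF i]] sum_distrib_left)
    also have "\<dots> = 1\<^sub>m n $$ (i,j)"
    proof (cases "i = j")
      case True
      have "c i * cnj (c i) * complex_of_real (s i) = complex_of_real ((1 / sqrt (s i)) * (1 / sqrt (s i)) * s i)"
        unfolding c_def complex_cnj_complex_of_real by (simp only: of_real_mult)
      also have "(1 / sqrt (s i)) * (1 / sqrt (s i)) * s i = 1"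
        using spos[OF i] by (simp add: field_simps)
      finally show ?thesis using True cs[OF i] i by simp
    next
      case False
      then show ?thesis using orth[OF j i] i j by simp
    qed
    finally show "(adjoint_mat W * W) $$ (i,j) = 1\<^sub>m n $$ (i,j)" .
  qed (use Wc in simp_all)
  then have "unitary_mat n W" using Wc by (simp add: unitary_mat_def)
  moreover have "c 0 \<noteq> 0" using spos[OF n] by (simp add: c_def)
  moreover have "\<forall>k<n. W $$ (k,0) = c 0 * v $ k" using n ws0 by (simp add: W_def)
  ultimately show ?thesis by blast
qed


lemma udu_entry:
  assumes U: "U \<in> carrier_mat n n" and i: "i < n" and j: "j < n"
  shows "(U * mat_diag n d * adjoint_mat U) $$ (i,j) = (\<Sum>k<n. U $$ (i,k) * d k * cnj (U $$ (j,k)))"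
proof -
  have UD: "U * mat_diag n d = mat n n (\<lambda>(i,j). U $$ (i,j) * d j)" by (rule mat_diag_mult_right[OF U])
  have UDc: "U * mat_diag n d \<in> carrier_mat n n" using U by simp
  have "(U * mat_diag n d * adjoint_mat U) $$ (i,j) = (\<Sum>k<n. (U * mat_diag n d) $$ (i,k) * adjoint_mat U $$ (k,j))"
    by (rule mult_entry[OF UDc adj_carrier[OF U] i j])
  also have "\<dots> = (\<Sum>k<n. U $$ (i,k) * d k * cnj (U $$ (j,k)))"
  proof (rule sum.cong[OF refl])
    fix k assume "k \<in> {..<n}" then have k: "k < n" by simp
    have "(U * mat_diag n d) $$ (i,k) = U $$ (i,k) * d k" unfolding UD using i k by simp
    moreover have "adjoint_mat U $$ (k,j) = cnj (U $$ (j,k))" using U j k by simp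
    ultimately show "(U * mat_diag n d) $$ (i,k) * adjoint_mat U $$ (k,j) = U $$ (i,k) * d k * cnj (U $$ (j,k))"
      by simp
  qed
  finally show ?thesis .
qed

lemma adju_entry:
  assumes U: "U \<in> carrier_mat n n" and i: "i < n" and j: "j < n"
  shows "(adjoint_mat U * U) $$ (i,j) = (\<Sum>k<n. cnj (U $$ (k,i)) * U $$ (k,j))"
proof -
  have "(adjoint_mat U * U) $$ (i,j) = (\<Sum>k<n. adjoint_mat U $$ (i,k) * U $$ (k,j))"
    by (rule mult_entry[OF adj_carrier[OF U] U i j])
  also have "\<dots> = (\<Sum>k<n. cnj (U $$ (k,i)) * U $$ (k,j))"
  proof (rule sum.cong[OF refl])
    fix k assume "k \<in> {..<n}" then have k: "k < n" by simp
    show "adjoint_mat U $$ (i,k) * U $$ (k,j) = cnj (U $$ (k,i)) * U $$ (k,j)" using U i k by simp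
  qed
  finally show ?thesis .
qed

lemma spectral:
  fixes A :: "complex mat"
  assumes "hermitian_mat n A"
  shows "\<exists>U ev. unitary_mat n U \<and> A = U * mat_diag n (\<lambda>i. complex_of_real (ev i)) * adjoint_mat U"
  using assms
proof (induction n arbitrary: A)
  case 0
  then have A: "A \<in> carrier_mat 0 0" by (simp add: hermitian_mat_def)
  have u: "unitary_mat 0 (1\<^sub>m 0)" by (simp add: unitary_mat_def)
  have eq: "A = 1\<^sub>m 0 * mat_diag 0 (\<lambda>i. complex_of_real 0) * adjoint_mat (1\<^sub>m 0)"
    by (rule eq_matI) (use A in simp_all)
  show ?case by (rule exI[of _ "1\<^sub>m 0"], rule exI[of _ "\<lambda>_. 0"], rule conjI[OF u], rule eq)
next
  case (Suc m A)
  define n where "n = Suc m"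
  have A: "A \<in> carrier_mat n n" and adjA: "adjoint_mat A = A"
    using Suc.prems by (simp_all add: hermitian_mat_def n_def)
  obtain as where cp: "char_poly A = (\<Prod>a\<leftarrow>as. [:- a, 1:])" and las: "length as = n"
    using char_poly_factorized[OF A] by blast
  then obtain a0 rest where as: "as = a0 # rest" by (cases as) (simp_all add: n_def)
  have "poly (char_poly A) a0 = 0" unfolding cp as by simp
  then have "eigenvalue A a0" using eigenvalue_root_char_poly[OF A] by simp
  then obtain v where ev: "eigenvector A v a0" unfolding eigenvalue_def by blast
  then have v: "v \<in> carrier_vec n" and v0: "v \<noteq> 0\<^sub>v n" and Av: "A *\<^sub>v v = a0 \<cdot>\<^sub>v v"
    using A by (simp_all add: eigenvector_def)
  obtain W c where W: "unitary_mat n W" and c0: "c \<noteq> 0" and Wcol: "\<And>k. k < n \<Longrightarrow> W $$ (k,0) = c * v $ k"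
    using exists_unitary_first_col[OF v v0] by (auto simp: n_def)
  have Wc: "W \<in> carrier_mat n n" using W by (simp add: unitary_mat_def)
  have WW: "adjoint_mat W * W = 1\<^sub>m n" using W by (simp add: unitary_mat_def)
  define A' where "A' = adjoint_mat W * (A * W)"
  have AWc: "A * W \<in> carrier_mat n n" using A Wc by simp
  have A'c: "A' \<in> carrier_mat n n" unfolding A'_def by (rule mult_carrier_mat[OF adj_carrier[OF Wc] AWc])
  have AW0: "(A * W) $$ (k,0) = a0 * W $$ (k,0)" if k: "k < n" for k
  proof -
    have "(A * W) $$ (k,0) = (\<Sum>l<n. A $$ (k,l) * W $$ (l,0))"
      by (rule mult_entry[OF A Wc k]) (simp add: n_def)
    also have "\<dots> = c * (\<Sum>l<n. A $$ (k,l) * v $ l)"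
      by (simp add: Wcol sum_distrib_left algebra_simps)
    also have "(\<Sum>l<n. A $$ (k,l) * v $ l) = (A *\<^sub>v v) $ k"
      using A v k by (simp add: scalar_prod_def lessThan_atLeast0)
    also have "\<dots> = a0 * v $ k" using Av v k by simp
    finally show ?thesis using Wcol[OF k] by simp
  qed
  have A'0: "A' $$ (i,0) = (if i = 0 then a0 else 0)" if i: "i < n" for i
  proof -
    have "A' $$ (i,0) = (\<Sum>k<n. adjoint_mat W $$ (i,k) * (A * W) $$ (k,0))"
      unfolding A'_def by (rule mult_entry[OF adj_carrier[OF Wc] AWc i]) (simp add: n_def)
    also have "\<dots> = a0 * (\<Sum>k<n. adjoint_mat W $$ (i,k) * W $$ (k,0))"
      by (simp add: AW0 sum_distrib_left algebra_simps)
    also have "(\<Sum>k<n. adjoint_mat W $$ (i,k) * W $$ (k,0)) = (adjoint_mat W * W) $$ (i,0)"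
      by (rule mult_entry[OF adj_carrier[OF Wc] Wc i, symmetric]) (simp add: n_def)
    also have "\<dots> = (if i = 0 then 1 else 0)" unfolding WW using i by (simp add: n_def)
    finally show ?thesis by simp
  qed
  have adjA': "adjoint_mat A' = A'"
  proof -
    have "adjoint_mat A' = adjoint_mat (A * W) * adjoint_mat (adjoint_mat W)"
      unfolding A'_def by (rule adj_mult[OF adj_carrier[OF Wc] AWc])
    also have "\<dots> = (adjoint_mat W * adjoint_mat A) * W"
      by (simp add: adj_mult[OF A Wc])
    also have "\<dots> = A'" unfolding adjA A'_def
      by (rule assoc_mult_mat[OF adj_carrier[OF Wc] A Wc])
    finally show ?thesis .
  qed
  have herm: "A' $$ (i,j) = cnj (A' $$ (j,i))" if "i < n" "j < n" for i j
  proof -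
    have "A' $$ (i,j) = adjoint_mat A' $$ (i,j)" by (simp add: adjA')
    also have "\<dots> = cnj (A' $$ (j,i))" using A'c that by simp
    finally show ?thesis .
  qed
  have n0: "0 < n" by (simp add: n_def)
  have a0r: "a0 = complex_of_real (Re a0)"
  proof -
    have "a0 = cnj a0" using herm[OF n0 n0] A'0[OF n0] by simp
    then show ?thesis by (metis Reals_cnj_iff complex_is_Real_iff of_real_Re)
  qed
  have A'0r: "A' $$ (0,j) = (if j = 0 then a0 else 0)" if j: "j < n" for j
  proof (cases "j = 0")
    case True then show ?thesis using A'0[OF n0] by simp
  next
    case False then show ?thesis using herm[OF n0 j] A'0[OF j] by simp
  qed
  define A3 where "A3 = mat m m (\<lambda>(i,j). A' $$ (Suc i, Suc j))"
  have A3c: "A3 \<in> carrier_mat m m" by (simp add: A3_def)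
  have "adjoint_mat A3 = A3"
  proof (rule eq_matI)
    fix i j assume "i < dim_row A3" "j < dim_col A3"
    then have i: "i < m" and j: "j < m" by (simp_all add: A3_def)
    have "adjoint_mat A3 $$ (i,j) = cnj (A' $$ (Suc j, Suc i))" using i j by (simp add: A3_def)
    also have "\<dots> = A' $$ (Suc i, Suc j)" using herm[of "Suc i" "Suc j"] i j by (simp add: n_def)
    finally show "adjoint_mat A3 $$ (i,j) = A3 $$ (i,j)" using i j by (simp add: A3_def)
  qed (simp_all add: A3_def)
  then have "hermitian_mat m A3" using A3c by (simp add: hermitian_mat_def)
  from Suc.IH[OF this] obtain U3 ev3 where U3: "unitary_mat m U3"
    and A3eq: "A3 = U3 * mat_diag m (\<lambda>i. complex_of_real (ev3 i)) * adjoint_mat U3" by blast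
  have U3c: "U3 \<in> carrier_mat m m" using U3 by (simp add: unitary_mat_def)
  define U1 where "U1 = mat n n (\<lambda>(i,j). if i = 0 \<and> j = 0 then 1 else if i = 0 \<or> j = 0 then 0 else U3 $$ (i - 1, j - 1))"
  have U1c: "U1 \<in> carrier_mat n n" by (simp add: U1_def)
  define ev where "ev = (\<lambda>i. if i = 0 then Re a0 else ev3 (i - 1))"
  define D where "D = mat_diag n (\<lambda>i. complex_of_real (ev i))"
  have Dc: "D \<in> carrier_mat n n" by (simp add: D_def)
  have U1e: "U1 $$ (i,j) = (if i = 0 \<and> j = 0 then 1 else if i = 0 \<or> j = 0 then 0 else U3 $$ (i - 1, j - 1))"
    if "i < n" "j < n" for i j using that by (simp add: U1_def)
  have U1u: "unitary_mat n U1"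
  proof -
    have "adjoint_mat U1 * U1 = 1\<^sub>m n"
    proof (rule eq_matI)
      fix i j assume "i < dim_row (1\<^sub>m n)" "j < dim_col (1\<^sub>m n)"
      then have i: "i < n" and j: "j < n" by simp_all
      have "(adjoint_mat U1 * U1) $$ (i,j) = (\<Sum>k<Suc m. cnj (U1 $$ (k,i)) * U1 $$ (k,j))"
        using adju_entry[OF U1c i j] by (simp add: n_def)
      also have "\<dots> = cnj (U1 $$ (0,i)) * U1 $$ (0,j) + (\<Sum>k<m. cnj (U1 $$ (Suc k,i)) * U1 $$ (Suc k,j))"
        by (rule sum.lessThan_Suc_shift)
      also have "\<dots> = 1\<^sub>m n $$ (i,j)"
      proof (cases i)
        case 0
        then show ?thesis using j by (cases j) (simp_all add: U1e n_def)
      next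
        case (Suc i')
        show ?thesis
        proof (cases j)
          case 0
          then show ?thesis using i Suc by (simp add: U1e n_def)
        next
          case (Suc j')
          have i': "i' < m" and j': "j' < m" using i j \<open>i = Suc i'\<close> Suc by (simp_all add: n_def)
          have "(\<Sum>k<m. cnj (U1 $$ (Suc k,i)) * U1 $$ (Suc k,j)) = (\<Sum>k<m. cnj (U3 $$ (k,i')) * U3 $$ (k,j'))"
            by (rule sum.cong[OF refl]) (use i' j' \<open>i = Suc i'\<close> Suc in \<open>simp add: U1e n_def\<close>)
          also have "\<dots> = (adjoint_mat U3 * U3) $$ (i',j')" by (rule adju_entry[OF U3c i' j', symmetric])
          also have "\<dots> = 1\<^sub>m m $$ (i',j')" using U3 by (simp add: unitary_mat_def)
          finally show ?thesis using i' j' \<open>i = Suc i'\<close> Suc by (simp add: U1e n_def)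
        qed
      qed
      finally show "(adjoint_mat U1 * U1) $$ (i,j) = 1\<^sub>m n $$ (i,j)" .
    qed (use U1c in simp_all)
    then show ?thesis using U1c by (simp add: unitary_mat_def)
  qed
  have A'eq: "A' = U1 * D * adjoint_mat U1"
  proof (rule eq_matI)
    fix i j assume "i < dim_row (U1 * D * adjoint_mat U1)" "j < dim_col (U1 * D * adjoint_mat U1)"
    then have i: "i < n" and j: "j < n" using U1c by simp_all
    have "(U1 * D * adjoint_mat U1) $$ (i,j) = (\<Sum>k<Suc m. U1 $$ (i,k) * complex_of_real (ev k) * cnj (U1 $$ (j,k)))"
      using udu_entry[OF U1c i j] by (simp add: n_def D_def)
    also have "\<dots> = U1 $$ (i,0) * complex_of_real (ev 0) * cnj (U1 $$ (j,0))
        + (\<Sum>k<m. U1 $$ (i,Suc k) * complex_of_real (ev (Suc k)) * cnj (U1 $$ (j,Suc k)))"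
      by (rule sum.lessThan_Suc_shift)
    also have "\<dots> = A' $$ (i,j)"
    proof (cases i)
      case 0
      then show ?thesis using j A'0r[OF j] a0r by (cases j) (simp_all add: U1e n_def ev_def)
    next
      case (Suc i')
      show ?thesis
      proof (cases j)
        case 0
        then show ?thesis using i Suc A'0[OF i] by (simp add: U1e n_def)
      next
        case (Suc j')
        have i': "i' < m" and j': "j' < m" using i j \<open>i = Suc i'\<close> Suc by (simp_all add: n_def)
        have "(\<Sum>k<m. U1 $$ (i,Suc k) * complex_of_real (ev (Suc k)) * cnj (U1 $$ (j,Suc k)))
            = (\<Sum>k<m. U3 $$ (i',k) * complex_of_real (ev3 k) * cnj (U3 $$ (j',k)))"
          by (rule sum.cong[OF refl]) (use i' j' \<open>i = Suc i'\<close> Suc in \<open>simp add: U1e n_def ev_def\<close>)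
        also have "\<dots> = A3 $$ (i',j')" unfolding A3eq by (rule udu_entry[OF U3c i' j', symmetric])
        also have "\<dots> = A' $$ (i,j)" using i' j' \<open>i = Suc i'\<close> Suc by (simp add: A3_def)
        finally show ?thesis using i j \<open>i = Suc i'\<close> Suc by (simp add: U1e n_def)
      qed
    qed
    finally show "A' $$ (i,j) = (U1 * D * adjoint_mat U1) $$ (i,j)" by simp
  qed (use U1c A'c in simp_all)
  have WW': "W * adjoint_mat W = 1\<^sub>m n" by (rule unitary_right[OF W])
  have AWA: "A = W * A' * adjoint_mat W"
  proof -
    have "W * A' = (W * adjoint_mat W) * (A * W)"
      unfolding A'_def by (rule assoc_mult_mat[OF Wc adj_carrier[OF Wc] AWc, symmetric])
    also have "\<dots> = A * W" unfolding WW' by (rule left_mult_one_mat[OF AWc])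
    finally have "W * A' * adjoint_mat W = A * W * adjoint_mat W" by simp
    also have "\<dots> = A * (W * adjoint_mat W)" by (rule assoc_mult_mat[OF A Wc adj_carrier[OF Wc]])
    also have "\<dots> = A" unfolding WW' by (rule right_mult_one_mat[OF A])
    finally show ?thesis by simp
  qed
  have UD: "W * U1 * D * adjoint_mat (W * U1) = W * A' * adjoint_mat W"
  proof -
    have UDc: "U1 * D \<in> carrier_mat n n" using U1c Dc by simp
    have "W * U1 * D = W * (U1 * D)" by (rule assoc_mult_mat[OF Wc U1c Dc])
    moreover have "adjoint_mat (W * U1) = adjoint_mat U1 * adjoint_mat W" by (rule adj_mult[OF Wc U1c])
    ultimately have "W * U1 * D * adjoint_mat (W * U1) = W * (U1 * D) * (adjoint_mat U1 * adjoint_mat W)" by simp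
    also have "\<dots> = W * ((U1 * D) * (adjoint_mat U1 * adjoint_mat W))"
      by (rule assoc_mult_mat[OF Wc UDc mult_carrier_mat[OF adj_carrier[OF U1c] adj_carrier[OF Wc]]])
    also have "(U1 * D) * (adjoint_mat U1 * adjoint_mat W) = (U1 * D * adjoint_mat U1) * adjoint_mat W"
      by (rule assoc_mult_mat[OF UDc adj_carrier[OF U1c] adj_carrier[OF Wc], symmetric])
    also have "W * (U1 * D * adjoint_mat U1 * adjoint_mat W) = W * A' * adjoint_mat W"
      unfolding A'eq[symmetric] by (rule assoc_mult_mat[OF Wc A'c adj_carrier[OF Wc], symmetric])
    finally show ?thesis .
  qed
  have "unitary_mat n (W * U1)" by (rule unitary_mult[OF W U1u])
  moreover have "A = (W * U1) * D * adjoint_mat (W * U1)" using AWA UD by simp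
  ultimately show ?case unfolding D_def n_def by blast
qed


lemma mat_diag_dims[simp]: "dim_row (mat_diag n f) = n" "dim_col (mat_diag n f) = n"
  by (simp_all add: mat_diag_def)

lemma mult_sq_carrier[simp]: "A \<in> carrier_mat n n \<Longrightarrow> B \<in> carrier_mat n n \<Longrightarrow> A * B \<in> carrier_mat n n"
  by (rule mult_carrier_mat)

lemma cnj_mult_self: "cnj z * z = complex_of_real ((cmod z)^2)"
  by (metis complex_norm_square mult.commute of_real_power)

lemma unitary_col_sum:
  assumes G: "unitary_mat n G" and i: "i < n"
  shows "(\<Sum>j<n. (cmod (G $$ (j,i)))^2) = 1"
proof -
  have Gc: "G \<in> carrier_mat n n" using G by (simp add: unitary_mat_def)
  have "complex_of_real (\<Sum>j<n. (cmod (G $$ (j,i)))^2) = (\<Sum>j<n. cnj (G $$ (j,i)) * G $$ (j,i))"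
    by (simp add: cnj_mult_self)
  also have "\<dots> = (adjoint_mat G * G) $$ (i,i)" by (rule adju_entry[OF Gc i i, symmetric])
  also have "\<dots> = 1" using G i by (simp add: unitary_mat_def)
  finally show ?thesis using of_real_eq_1_iff by blast
qed

lemma unitary_row_sum:
  assumes G: "unitary_mat n G" and j: "j < n"
  shows "(\<Sum>i<n. (cmod (G $$ (j,i)))^2) = 1"
proof -
  have Gc: "G \<in> carrier_mat n n" using G by (simp add: unitary_mat_def)
  have "(\<Sum>i<n. (cmod (G $$ (j,i)))^2) = (\<Sum>i<n. (cmod (adjoint_mat G $$ (i,j)))^2)"
    by (rule sum.cong[OF refl]) (use Gc j in simp)
  also have "\<dots> = 1" by (rule unitary_col_sum[OF unitary_adj[OF G] j])
  finally show ?thesis .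
qed

lemma assoc_test:
  assumes "A \<in> carrier_mat n n" "B \<in> carrier_mat n n" "C \<in> carrier_mat n n" "D \<in> carrier_mat n n"
  shows "(A * B) * (C * D) = A * (B * C) * D"
  using assms by (simp add: assoc_mult_mat[of _ n n _ n _ n])

abbreviation Dg :: "nat \<Rightarrow> (nat \<Rightarrow> real) \<Rightarrow> complex mat" where
  "Dg n a \<equiv> mat_diag n (\<lambda>i. complex_of_real (a i))"

lemma intertwine:
  assumes U: "unitary_mat n U" and V: "unitary_mat n V"
    and eq: "U * Dg n a * adjoint_mat U = V * Dg n c * adjoint_mat V"
    and j: "j < n" and i: "i < n"
  shows "complex_of_real (c j) * (adjoint_mat V * U) $$ (j,i) = (adjoint_mat V * U) $$ (j,i) * complex_of_real (a i)"
proof -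
  have Uc: "U \<in> carrier_mat n n" and Vc: "V \<in> carrier_mat n n" using U V by (simp_all add: unitary_mat_def)
  have UU: "adjoint_mat U * U = 1\<^sub>m n" and VV: "adjoint_mat V * V = 1\<^sub>m n"
    using U V by (simp_all add: unitary_mat_def)
  define G where "G = adjoint_mat V * U"
  have Gc: "G \<in> carrier_mat n n" unfolding G_def by (rule mult_carrier_mat[OF adj_carrier[OF Vc] Uc])
  have "G * Dg n a = adjoint_mat V * U * Dg n a * (adjoint_mat U * U)"
    using Uc Vc by (simp add: UU G_def)
  also have "\<dots> = adjoint_mat V * (U * Dg n a * adjoint_mat U) * U"
    using Uc Vc adj_carrier[OF Uc] adj_carrier[OF Vc] by (simp add: assoc_mult_mat[of _ n n _ n _ n])
  also have "\<dots> = adjoint_mat V * (V * Dg n c * adjoint_mat V) * U" by (simp add: eq)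
  also have "\<dots> = (adjoint_mat V * V) * Dg n c * (adjoint_mat V * U)"
    using Uc Vc adj_carrier[OF Uc] adj_carrier[OF Vc] by (simp add: assoc_mult_mat[of _ n n _ n _ n])
  also have "\<dots> = Dg n c * G" using Uc Vc by (simp add: VV G_def)
  finally have GD: "G * Dg n a = Dg n c * G" .
  have "(G * Dg n a) $$ (j,i) = G $$ (j,i) * complex_of_real (a i)"
    using mat_diag_mult_right[OF Gc] i j by simp
  moreover have "(Dg n c * G) $$ (j,i) = complex_of_real (c j) * G $$ (j,i)"
    using mat_diag_mult_left[OF Gc] i j by simp
  ultimately show ?thesis using GD by (simp add: G_def)
qed

lemma spectrum_invariant:
  fixes h :: "real \<Rightarrow> real"
  assumes U: "unitary_mat n U" and V: "unitary_mat n V"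
    and eq: "U * Dg n a * adjoint_mat U = V * Dg n c * adjoint_mat V"
  shows "(\<Sum>i<n. h (a i)) = (\<Sum>j<n. h (c j))"
proof -
  have Uc: "U \<in> carrier_mat n n" and Vc: "V \<in> carrier_mat n n" using U V by (simp_all add: unitary_mat_def)
  define G where "G = adjoint_mat V * U"
  have G: "unitary_mat n G" unfolding G_def by (rule unitary_mult[OF unitary_adj[OF V] U])
  define P where "P = (\<lambda>j i. (cmod (G $$ (j,i)))^2)"
  have key: "P j i * h (a i) = P j i * h (c j)" if "j < n" "i < n" for i j
  proof (cases "G $$ (j,i) = 0")
    case True then show ?thesis by (simp add: P_def)
  next
    case False
    have "complex_of_real (c j) * G $$ (j,i) = G $$ (j,i) * complex_of_real (a i)"
      using intertwine[OF U V eq that] by (simp add: G_def)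
    with False have "c j = a i" by (simp add: mult.commute)
    then show ?thesis by simp
  qed
  have "(\<Sum>i<n. h (a i)) = (\<Sum>i<n. (\<Sum>j<n. P j i) * h (a i))"
    by (rule sum.cong[OF refl]) (use unitary_col_sum[OF G] in \<open>simp add: P_def\<close>)
  also have "\<dots> = (\<Sum>i<n. \<Sum>j<n. P j i * h (a i))" by (simp add: sum_distrib_right)
  also have "\<dots> = (\<Sum>i<n. \<Sum>j<n. P j i * h (c j))"
    by (rule sum.cong[OF refl], rule sum.cong[OF refl]) (simp add: key)
  also have "\<dots> = (\<Sum>j<n. \<Sum>i<n. P j i * h (c j))" by (rule sum.swap)
  also have "\<dots> = (\<Sum>j<n. (\<Sum>i<n. P j i) * h (c j))" by (simp add: sum_distrib_right)
  also have "\<dots> = (\<Sum>j<n. h (c j))"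
    by (rule sum.cong[OF refl]) (use unitary_row_sum[OF G] in \<open>simp add: P_def\<close>)
  finally show ?thesis .
qed

lemma trace_udu:
  assumes U: "unitary_mat n U"
  shows "trace_mat (U * Dg n x * adjoint_mat U) = complex_of_real (\<Sum>i<n. x i)"
proof -
  have Uc: "U \<in> carrier_mat n n" using U by (simp add: unitary_mat_def)
  have UU: "adjoint_mat U * U = 1\<^sub>m n" using U by (simp add: unitary_mat_def)
  have "trace_mat ((U * Dg n x) * adjoint_mat U) = trace_mat (adjoint_mat U * (U * Dg n x))"
    by (rule trace_comm[OF mult_carrier_mat[OF Uc mat_diag_dim] adj_carrier[OF Uc]])
  also have "adjoint_mat U * (U * Dg n x) = Dg n x"
    using Uc by (simp add: assoc_mult_mat[of _ n n _ n _ n, symmetric] UU)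
  also have "trace_mat (Dg n x) = complex_of_real (\<Sum>i<n. x i)"
    by (simp add: trace_mat_def mat_diag_def)
  finally show ?thesis .
qed

lemma mat_fun_trace:
  assumes U: "unitary_mat n U" and A: "A = U * Dg n a * adjoint_mat U"
  shows "Re (trace_mat (mat_fun h A)) = (\<Sum>i<n. h (a i))"
proof -
  have Uc: "U \<in> carrier_mat n n" using U by (simp add: unitary_mat_def)
  have dA: "dim_row A = n" using A Uc by simp
  let ?P = "\<lambda>M. \<exists>U' ev. unitary_mat (dim_row A) U' \<and>
      A = U' * mat_diag (dim_row A) (\<lambda>i. complex_of_real (ev i)) * adjoint_mat U' \<and>
      M = U' * mat_diag (dim_row A) (\<lambda>i. complex_of_real (h (ev i))) * adjoint_mat U'"
  have ex: "\<exists>M. ?P M" using U A unfolding dA by blast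
  have "?P (mat_fun h A)" unfolding mat_fun_def by (rule someI_ex[OF ex])
  then obtain U' ev where U': "unitary_mat n U'" and A': "A = U' * Dg n ev * adjoint_mat U'"
    and M: "mat_fun h A = U' * Dg n (\<lambda>i. h (ev i)) * adjoint_mat U'" unfolding dA by blast
  have "Re (trace_mat (mat_fun h A)) = (\<Sum>i<n. h (ev i))" unfolding M trace_udu[OF U'] by simp
  also have "\<dots> = (\<Sum>i<n. h (a i))"
    by (rule spectrum_invariant[OF U' U]) (use A A' in simp)
  finally show ?thesis .
qed


lemma cnj_r_self: "cnj z * complex_of_real r * z = complex_of_real ((cmod z)^2 * r)"
proof -
  have "cnj z * complex_of_real r * z = (cnj z * z) * complex_of_real r" by (simp add: ac_simps)
  then show ?thesis unfolding cnj_mult_self of_real_mult .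
qed

lemma trace_AB:
  assumes U: "unitary_mat n U" and V: "unitary_mat n V"
  shows "Re (trace_mat ((U * Dg n a * adjoint_mat U) * (V * Dg n b * adjoint_mat V)))
    = (\<Sum>i<n. a i * (\<Sum>j<n. (cmod ((adjoint_mat V * U) $$ (j,i)))^2 * b j))"
proof -
  have Uc: "U \<in> carrier_mat n n" and Vc: "V \<in> carrier_mat n n" using U V by (simp_all add: unitary_mat_def)
  define G where "G = adjoint_mat V * U"
  have Gc: "G \<in> carrier_mat n n" using Uc Vc by (simp add: G_def)
  have aG: "adjoint_mat (adjoint_mat V * U) = adjoint_mat U * V" by (simp add: adj_mult[OF adj_carrier[OF Vc] Uc])
  have aG2: "adjoint_mat (adjoint_mat U * V) = adjoint_mat V * U" by (simp add: adj_mult[OF adj_carrier[OF Uc] Vc])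
  define X where "X = Dg n a * (adjoint_mat U * V) * Dg n b * adjoint_mat V"
  have Xc: "X \<in> carrier_mat n n" using Uc Vc by (simp add: X_def)
  have "(U * Dg n a * adjoint_mat U) * (V * Dg n b * adjoint_mat V) = U * X"
    using Uc Vc by (simp add: X_def assoc_mult_mat[of _ n n _ n _ n])
  then have "trace_mat ((U * Dg n a * adjoint_mat U) * (V * Dg n b * adjoint_mat V)) = trace_mat (X * U)"
    using trace_comm[OF Uc Xc] by simp
  also have "X * U = Dg n a * (adjoint_mat G * Dg n b * adjoint_mat (adjoint_mat G))"
    using Uc Vc by (simp add: X_def aG aG2 G_def assoc_mult_mat[of _ n n _ n _ n])
  finally have tr: "trace_mat ((U * Dg n a * adjoint_mat U) * (V * Dg n b * adjoint_mat V))
     = trace_mat (Dg n a * (adjoint_mat G * Dg n b * adjoint_mat (adjoint_mat G)))" .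
  define M where "M = adjoint_mat G * Dg n b * adjoint_mat (adjoint_mat G)"
  have Mc: "M \<in> carrier_mat n n" using Gc by (simp add: M_def)
  have Mii: "M $$ (i,i) = complex_of_real (\<Sum>j<n. (cmod (G $$ (j,i)))^2 * b j)" if i: "i < n" for i
  proof -
    have "M $$ (i,i) = (\<Sum>k<n. adjoint_mat G $$ (i,k) * complex_of_real (b k) * cnj (adjoint_mat G $$ (i,k)))"
      unfolding M_def by (rule udu_entry[OF adj_carrier[OF Gc] i i])
    also have "\<dots> = (\<Sum>k<n. complex_of_real ((cmod (G $$ (k,i)))^2 * b k))"
    proof (rule sum.cong[OF refl])
      fix k assume "k \<in> {..<n}" then have k: "k < n" by simp
      have "adjoint_mat G $$ (i,k) = cnj (G $$ (k,i))" using Gc i k by simp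
      then show "adjoint_mat G $$ (i,k) * complex_of_real (b k) * cnj (adjoint_mat G $$ (i,k))
          = complex_of_real ((cmod (G $$ (k,i)))^2 * b k)"
        using cnj_r_self[of "G $$ (k,i)" "b k"] by simp
    qed
    also have "\<dots> = complex_of_real (\<Sum>j<n. (cmod (G $$ (j,i)))^2 * b j)" by simp
    finally show ?thesis .
  qed
  have "trace_mat (Dg n a * M) = (\<Sum>i<n. complex_of_real (a i) * M $$ (i,i))"
    using mat_diag_mult_left[OF Mc] by (simp add: trace_mat_def)
  also have "\<dots> = complex_of_real (\<Sum>i<n. a i * (\<Sum>j<n. (cmod (G $$ (j,i)))^2 * b j))"
    by (simp add: Mii)
  finally show ?thesis using tr by (simp add: M_def G_def)
qed

lemma posdef_eigen_pos:
  assumes B: "posdef_mat n B" and V: "unitary_mat n V" and Beq: "B = V * Dg n b * adjoint_mat V"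
    and j: "j < n"
  shows "b j > 0"
proof -
  have Vc: "V \<in> carrier_mat n n" using V by (simp add: unitary_mat_def)
  have VV: "adjoint_mat V * V = 1\<^sub>m n" using V by (simp add: unitary_mat_def)
  have Bc: "B \<in> carrier_mat n n" using Beq Vc by simp
  have BV: "B * V = V * Dg n b"
    using Vc by (simp add: Beq VV assoc_mult_mat[of _ n n _ n _ n])
  define v where "v = col V j"
  have vc: "v \<in> carrier_vec n" using Vc unfolding v_def carrier_vec_def by (simp add: carrier_matD)
  have Bv: "(B *\<^sub>v v) $ i = V $$ (i,j) * complex_of_real (b j)" if i: "i < n" for i
  proof -
    have "(B *\<^sub>v v) $ i = (B * V) $$ (i,j)" using Bc Vc i j by (simp add: v_def)
    also have "\<dots> = V $$ (i,j) * complex_of_real (b j)"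
      unfolding BV using mat_diag_mult_right[OF Vc] i j by simp
    finally show ?thesis .
  qed
  have "(\<Sum>i<n. cnj (v $ i) * (B *\<^sub>v v) $ i) = (\<Sum>i<n. complex_of_real ((cmod (V $$ (i,j)))^2 * b j))"
  proof (rule sum.cong[OF refl])
    fix i assume "i \<in> {..<n}" then have i: "i < n" by simp
    have vi: "v $ i = V $$ (i,j)" using Vc i j by (simp add: v_def)
    show "cnj (v $ i) * (B *\<^sub>v v) $ i = complex_of_real ((cmod (V $$ (i,j)))^2 * b j)"
      unfolding Bv[OF i] vi of_real_mult cnj_mult_self[symmetric] by (simp only: mult.assoc)
  qed
  also have "\<dots> = complex_of_real (\<Sum>i<n. (cmod (V $$ (i,j)))^2 * b j)" by (simp only: of_real_sum)
  also have "(\<Sum>i<n. (cmod (V $$ (i,j)))^2 * b j) = b j"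
    unfolding sum_distrib_right[symmetric] unitary_col_sum[OF V j] by simp
  finally have Q: "(\<Sum>i<n. cnj (v $ i) * (B *\<^sub>v v) $ i) = complex_of_real (b j)" .
  have v0: "v \<noteq> 0\<^sub>v n"
  proof
    assume "v = 0\<^sub>v n"
    moreover have "v $ i = V $$ (i,j)" if "i < n" for i using Vc that j by (simp add: v_def)
    ultimately have "\<forall>i<n. V $$ (i,j) = 0" by simp
    then have "(\<Sum>i<n. (cmod (V $$ (i,j)))^2) = 0" by simp
    then show False using unitary_col_sum[OF V j] by simp
  qed
  have "0 < Re (\<Sum>i<n. cnj (v $ i) * (B *\<^sub>v v) $ i)"
    using B vc v0 unfolding posdef_mat_def by blast
  then show ?thesis using Q by simp
qed


lemma posdef_construct:
  assumes V: "unitary_mat n V" and c: "\<And>j. j < n \<Longrightarrow> c j > 0"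
  shows "posdef_mat n (V * Dg n c * adjoint_mat V)"
proof -
  have Vc: "V \<in> carrier_mat n n" using V by (simp add: unitary_mat_def)
  have VV': "V * adjoint_mat V = 1\<^sub>m n" by (rule unitary_right[OF V])
  define A where "A = V * Dg n c * adjoint_mat V"
  have Ac: "A \<in> carrier_mat n n" using Vc by (simp add: A_def)
  have "adjoint_mat A = adjoint_mat (adjoint_mat V) * adjoint_mat (V * Dg n c)"
    unfolding A_def by (rule adj_mult[OF mult_sq_carrier[OF Vc mat_diag_dim] adj_carrier[OF Vc]])
  also have "adjoint_mat (V * Dg n c) = Dg n c * adjoint_mat V"
    by (simp add: adj_mult[OF Vc mat_diag_dim])
  finally have "adjoint_mat A = A" using Vc by (simp add: A_def assoc_mult_mat[of _ n n _ n _ n])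
  then have herm: "hermitian_mat n A" using Ac by (simp add: hermitian_mat_def)
  have pos: "0 < Re (\<Sum>i<n. cnj (v $ i) * (A *\<^sub>v v) $ i)" if v: "v \<in> carrier_vec n" and v0: "v \<noteq> 0\<^sub>v n" for v
  proof -
    define y where "y = (\<lambda>l. \<Sum>k<n. cnj (V $$ (k,l)) * v $ k)"
    have Aik: "A $$ (i,k) = (\<Sum>l<n. V $$ (i,l) * complex_of_real (c l) * cnj (V $$ (k,l)))"
      if "i < n" "k < n" for i k unfolding A_def by (rule udu_entry[OF Vc that])
    have Av: "(A *\<^sub>v v) $ i = (\<Sum>l<n. V $$ (i,l) * complex_of_real (c l) * y l)" if i: "i < n" for i
    proof -
      have "(A *\<^sub>v v) $ i = (\<Sum>k<n. A $$ (i,k) * v $ k)"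
        using Ac v i by (simp add: scalar_prod_def lessThan_atLeast0)
      also have "\<dots> = (\<Sum>k<n. \<Sum>l<n. V $$ (i,l) * complex_of_real (c l) * cnj (V $$ (k,l)) * v $ k)"
        by (rule sum.cong[OF refl]) (simp add: Aik i sum_distrib_right)
      also have "\<dots> = (\<Sum>l<n. \<Sum>k<n. V $$ (i,l) * complex_of_real (c l) * cnj (V $$ (k,l)) * v $ k)"
        by (rule sum.swap)
      also have "\<dots> = (\<Sum>l<n. V $$ (i,l) * complex_of_real (c l) * y l)"
        by (rule sum.cong[OF refl]) (simp add: y_def sum_distrib_left mult.assoc)
      finally show ?thesis .
    qed
    have cy: "cnj (y l) = (\<Sum>i<n. V $$ (i,l) * cnj (v $ i))" for l
      by (simp add: y_def)
    have "(\<Sum>i<n. cnj (v $ i) * (A *\<^sub>v v) $ i) = (\<Sum>i<n. \<Sum>l<n. cnj (v $ i) * (V $$ (i,l) * complex_of_real (c l) * y l))"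
      by (rule sum.cong[OF refl]) (simp add: Av sum_distrib_left)
    also have "\<dots> = (\<Sum>l<n. \<Sum>i<n. cnj (v $ i) * (V $$ (i,l) * complex_of_real (c l) * y l))"
      by (rule sum.swap)
    also have "\<dots> = (\<Sum>l<n. cnj (y l) * complex_of_real (c l) * y l)"
    proof (rule sum.cong[OF refl])
      fix l
      have "(\<Sum>i<n. cnj (v $ i) * (V $$ (i,l) * complex_of_real (c l) * y l))
          = (\<Sum>i<n. (V $$ (i,l) * cnj (v $ i)) * (complex_of_real (c l) * y l))"
        by (rule sum.cong[OF refl]) (simp only: ac_simps)
      also have "\<dots> = cnj (y l) * (complex_of_real (c l) * y l)"
        unfolding cy by (rule sum_distrib_right[symmetric])
      finally show "(\<Sum>i<n. cnj (v $ i) * (V $$ (i,l) * complex_of_real (c l) * y l)) = cnj (y l) * complex_of_real (c l) * y l"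
        by (simp only: mult.assoc)
    qed
    also have "\<dots> = (\<Sum>l<n. complex_of_real ((cmod (y l))^2 * c l))"
      by (rule sum.cong[OF refl]) (rule cnj_r_self)
    also have "\<dots> = complex_of_real (\<Sum>l<n. (cmod (y l))^2 * c l)" by (simp only: of_real_sum)
    finally have Q: "(\<Sum>i<n. cnj (v $ i) * (A *\<^sub>v v) $ i) = complex_of_real (\<Sum>l<n. (cmod (y l))^2 * c l)" .
    obtain l where l: "l < n" "y l \<noteq> 0"
    proof (rule ccontr)
      assume "\<not> thesis"
      then have y0: "\<And>l. l < n \<Longrightarrow> y l = 0" using that by blast
      have "v = 0\<^sub>v n"
      proof (rule eq_vecI)
        fix i assume "i < dim_vec (0\<^sub>v n)" then have i: "i < n" by simp
        have "(\<Sum>l<n. V $$ (i,l) * y l) = (\<Sum>l<n. \<Sum>k<n. V $$ (i,l) * cnj (V $$ (k,l)) * v $ k)"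
          by (simp add: y_def sum_distrib_left mult.assoc)
        also have "\<dots> = (\<Sum>k<n. (\<Sum>l<n. V $$ (i,l) * cnj (V $$ (k,l))) * v $ k)"
          by (subst sum.swap) (simp add: sum_distrib_right)
        also have "\<dots> = (\<Sum>k<n. (V * adjoint_mat V) $$ (i,k) * v $ k)"
        proof (rule sum.cong[OF refl])
          fix k assume "k \<in> {..<n}" then have k: "k < n" by simp
          have "(V * adjoint_mat V) $$ (i,k) = (\<Sum>l<n. V $$ (i,l) * adjoint_mat V $$ (l,k))"
            by (rule mult_entry[OF Vc adj_carrier[OF Vc] i k])
          also have "\<dots> = (\<Sum>l<n. V $$ (i,l) * cnj (V $$ (k,l)))"
            by (rule sum.cong[OF refl]) (use Vc k in simp)
          finally show "(\<Sum>l<n. V $$ (i,l) * cnj (V $$ (k,l))) * v $ k = (V * adjoint_mat V) $$ (i,k) * v $ k"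
            by simp
        qed
        also have "\<dots> = (\<Sum>k<n. if i = k then v $ k else 0)"
          by (rule sum.cong[OF refl]) (use i in \<open>simp add: VV'\<close>)
        also have "\<dots> = v $ i" using i by (simp add: sum.delta sum.delta')
        finally have "v $ i = (\<Sum>l<n. V $$ (i,l) * y l)" by simp
        also have "\<dots> = 0" by (simp add: y0)
        finally show "v $ i = 0\<^sub>v n $ i" using i by simp
      qed (use v in simp)
      with v0 show False by simp
    qed
    have "0 < (\<Sum>l<n. (cmod (y l))^2 * c l)"
    proof (rule sum_pos2[of "{..<n}" l])
      show "0 < (cmod (y l))^2 * c l" using l c[OF l(1)] by simp
      show "\<And>i. i \<in> {..<n} \<Longrightarrow> 0 \<le> (cmod (y i))^2 * c i" using c by (simp add: less_imp_le)
    qed (use l in simp_all)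
    then show ?thesis unfolding Q by simp
  qed
  show ?thesis unfolding posdef_mat_def A_def[symmetric] using herm pos by blast
qed


lemma partB:
  fixes f :: "real \<Rightarrow> real"
  assumes F: "Fcc f" and B: "posdef_mat n B"
  shows "Re (trace_mat (mat_fun f B)) =
     (INF A\<in>{A. posdef_mat n A}. Re (trace_mat (A * B)) - Re (trace_mat (mat_fun (fcheck f) A)))"
proof -
  note mono = FccD(1)[OF F] and conc = FccD(2)[OF F] and lim = FccD(3)[OF F]
  have "hermitian_mat n B" using B by (simp add: posdef_mat_def)
  from spectral[OF this] obtain V b where V: "unitary_mat n V" and Beq: "B = V * Dg n b * adjoint_mat V"
    by blast
  have Vc: "V \<in> carrier_mat n n" using V by (simp add: unitary_mat_def)
  have bpos: "b j > 0" if "j < n" for j by (rule posdef_eigen_pos[OF B V Beq that])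
  define L where "L = (\<Sum>j<n. f (b j))"
  have LB: "Re (trace_mat (mat_fun f B)) = L" unfolding L_def by (rule mat_fun_trace[OF V Beq])
  define g where "g = (\<lambda>A. Re (trace_mat (A * B)) - Re (trace_mat (mat_fun (fcheck f) A)))"
  have lower: "L \<le> g A" if A: "posdef_mat n A" for A
  proof -
    have "hermitian_mat n A" using A by (simp add: posdef_mat_def)
    from spectral[OF this] obtain U a where U: "unitary_mat n U" and Aeq: "A = U * Dg n a * adjoint_mat U"
      by blast
    have apos: "a i > 0" if "i < n" for i by (rule posdef_eigen_pos[OF A U Aeq that])
    define P where "P = (\<lambda>j i. (cmod ((adjoint_mat V * U) $$ (j,i)))^2)"
    have G: "unitary_mat n (adjoint_mat V * U)" by (rule unitary_mult[OF unitary_adj[OF V] U])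
    have Pcol: "(\<Sum>j<n. P j i) = 1" if "i < n" for i unfolding P_def by (rule unitary_col_sum[OF G that])
    have Prow: "(\<Sum>i<n. P j i) = 1" if "j < n" for j unfolding P_def by (rule unitary_row_sum[OF G that])
    define x where "x = (\<lambda>i. \<Sum>j<n. P j i * b j)"
    have xpos: "x i > 0" if i: "i < n" for i
    proof -
      have nn: "\<forall>j\<in>{..<n}. 0 \<le> P j i * b j" using bpos by (simp add: P_def less_imp_le)
      have "x i \<ge> 0" unfolding x_def by (rule sum_nonneg) (use nn in blast)
      moreover have "x i \<noteq> 0"
      proof
        assume "x i = 0"
        then have "\<forall>j\<in>{..<n}. P j i * b j = 0" using nn unfolding x_def
          using sum_nonneg_eq_0_iff[of "{..<n}" "\<lambda>j. P j i * b j"] by blast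
        then have "\<forall>j\<in>{..<n}. P j i = 0" using bpos by (metis lessThan_iff mult_eq_0_iff order_less_irrefl)
        then have "(\<Sum>j<n. P j i) = 0" by simp
        then show False using Pcol[OF i] by simp
      qed
      ultimately show ?thesis by simp
    qed
    have trAB: "Re (trace_mat (A * B)) = (\<Sum>i<n. a i * x i)"
      unfolding Aeq Beq x_def P_def by (rule trace_AB[OF U V])
    have trF: "Re (trace_mat (mat_fun (fcheck f) A)) = (\<Sum>i<n. fcheck f (a i))"
      by (rule mat_fun_trace[OF U Aeq])
    have each: "f (x i) \<le> a i * x i - fcheck f (a i)" if i: "i < n" for i
      using fcheck_le[OF mono lim apos[OF i] xpos[OF i]] by (simp add: mult.commute)
    have jensen: "(\<Sum>j<n. P j i * f (b j)) \<le> f (x i)" if i: "i < n" for i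
    proof -
      have "f (\<Sum>j\<in>{..<n}. P j i *\<^sub>R b j) \<ge> (\<Sum>j\<in>{..<n}. P j i * f (b j))"
        by (rule concave_on_sum[OF _ _ conc]) (use i Pcol[OF i] bpos in \<open>auto simp: P_def\<close>)
      then show ?thesis by (simp add: x_def)
    qed
    have "L = (\<Sum>j<n. (\<Sum>i<n. P j i) * f (b j))" unfolding L_def
      by (rule sum.cong[OF refl]) (simp add: Prow)
    also have "\<dots> = (\<Sum>i<n. \<Sum>j<n. P j i * f (b j))"
      by (simp add: sum_distrib_right) (rule sum.swap)
    also have "\<dots> \<le> (\<Sum>i<n. f (x i))" by (rule sum_mono) (simp add: jensen)
    also have "\<dots> \<le> (\<Sum>i<n. a i * x i - fcheck f (a i))" by (rule sum_mono) (simp add: each)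
    also have "\<dots> = g A" unfolding g_def trAB trF by (simp add: sum_subtractf)
    finally show ?thesis .
  qed
  have ne: "{A. posdef_mat n A} \<noteq> {}"
    using posdef_construct[OF V, of "\<lambda>_. 1"] by auto
  have bdd: "bdd_below (g ` {A. posdef_mat n A})"
    using lower by (auto simp: bdd_below_def)
  have ge: "L \<le> (INF A\<in>{A. posdef_mat n A}. g A)"
    by (rule cINF_greatest[OF ne]) (use lower in simp)
  have le: "(INF A\<in>{A. posdef_mat n A}. g A) \<le> L"
  proof (rule field_le_epsilon)
    fix e :: real assume e: "e > 0"
    define d where "d = e / (real n + 1)"
    have d: "d > 0" using e by (simp add: d_def)
    have "\<forall>j. \<exists>a. j < n \<longrightarrow> a > 0 \<and> a * b j - fcheck f a < f (b j) + d"
    proof (intro allI)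
      fix j show "\<exists>a. j < n \<longrightarrow> a > 0 \<and> a * b j - fcheck f a < f (b j) + d"
      proof (cases "j < n")
        case True
        show ?thesis
        proof (rule ccontr)
          assume "\<not> ?thesis"
          then have H: "\<And>a. a > 0 \<Longrightarrow> f (b j) + d \<le> a * b j - fcheck f a" using True by force
          have "f (b j) + d \<le> fcheck (fcheck f) (b j)" by (rule fcheck_ge) (rule H)
          also have "\<dots> = f (b j)" by (rule fcheck_fcheck[OF F bpos[OF True]])
          finally show False using d by simp
        qed
      qed simp
    qed
    then obtain c where c: "\<And>j. j < n \<Longrightarrow> c j > 0 \<and> c j * b j - fcheck f (c j) < f (b j) + d"
      by (metis choice)
    define Ac where "Ac = V * Dg n c * adjoint_mat V"
    have Acp: "posdef_mat n Ac" unfolding Ac_def by (rule posdef_construct[OF V]) (use c in blast)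
    have V1: "adjoint_mat V * V = 1\<^sub>m n" using V by (simp add: unitary_mat_def)
    have trAB: "Re (trace_mat (Ac * B)) = (\<Sum>i<n. c i * b i)"
    proof -
      have "Re (trace_mat (Ac * B)) = (\<Sum>i<n. c i * (\<Sum>j<n. (cmod ((adjoint_mat V * V) $$ (j,i)))^2 * b j))"
        unfolding Ac_def Beq by (rule trace_AB[OF V V])
      also have "\<dots> = (\<Sum>i<n. c i * b i)"
      proof (rule sum.cong[OF refl])
        fix i assume "i \<in> {..<n}" then have i: "i < n" by simp
        have "(\<Sum>j<n. (cmod ((adjoint_mat V * V) $$ (j,i)))^2 * b j) = (\<Sum>j<n. if j = i then b j else 0)"
          by (rule sum.cong[OF refl]) (use i in \<open>simp add: V1\<close>)
        also have "\<dots> = b i" using i by (simp add: sum.delta)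
        finally show "c i * (\<Sum>j<n. (cmod ((adjoint_mat V * V) $$ (j,i)))^2 * b j) = c i * b i" by simp
      qed
      finally show ?thesis .
    qed
    have trF: "Re (trace_mat (mat_fun (fcheck f) Ac)) = (\<Sum>i<n. fcheck f (c i))"
      by (rule mat_fun_trace[OF V]) (simp add: Ac_def)
    have "(INF A\<in>{A. posdef_mat n A}. g A) \<le> g Ac"
      by (rule cINF_lower[OF bdd]) (use Acp in simp)
    also have "g Ac = (\<Sum>i<n. c i * b i - fcheck f (c i))"
      unfolding g_def trAB trF by (simp add: sum_subtractf)
    also have "\<dots> \<le> (\<Sum>i<n. f (b i) + d)"
      by (rule sum_mono) (use c in \<open>simp add: less_imp_le\<close>)
    also have "\<dots> = L + real n * d" by (simp add: L_def sum.distrib)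
    also have "\<dots> \<le> L + e"
    proof -
      have "real n * d \<le> e" using e by (simp add: d_def field_simps)
      then show ?thesis by simp
    qed
    finally show "(INF A\<in>{A. posdef_mat n A}. g A) \<le> L + e" .
  qed
  show ?thesis unfolding LB using ge le by (simp add: g_def)
qed


theorem lemmaA2:
  shows "(\<forall>f::real \<Rightarrow> real. Fcc f \<longrightarrow>
            Fcc (fcheck f) \<and> (\<forall>t>0. fcheck (fcheck f) t = f t))
       \<and> (\<forall>(f::real \<Rightarrow> real) (n::nat) B. Fcc f \<longrightarrow> posdef_mat n B \<longrightarrow>
            Re (trace_mat (mat_fun f B)) =
              (INF A\<in>{A. posdef_mat n A}.
                 Re (trace_mat (A * B)) - Re (trace_mat (mat_fun (fcheck f) A))))
       \<and> (\<forall>(f::real \<Rightarrow> real) (r::real). mono_on {0<..} f \<longrightarrow> r > 0 \<longrightarrow>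
            concave_on {0<..} (\<lambda>x. f (x powr (1 + r))) \<longrightarrow>
            Fcc f \<and> convex_on {0<..} (\<lambda>x. fcheck f (x powr (- r))))
       \<and> (\<forall>(f::real \<Rightarrow> real) (r::real). Fcc f \<longrightarrow> r > 0 \<longrightarrow>
            convex_on {0<..} (\<lambda>x. f (x powr (1 + r))) \<longrightarrow>
            concave_on {0<..} (\<lambda>x. fcheck f (x powr (- r))))"
  using partA partB partC_Fcc partC_convex partD by blast

end
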